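(* Assume the setting described in the context. Let $k\in\mathbb{Z}$, let $R\in\mathcal{D}_k$ be a good cube, and let $i\ge r+1$ be an integer with $R^{(i)}\subset Q^*$. Then for every $(x,t)\in W_R$ and every $f\in L^1_{loc}(\mu)$, $$\left(\int_{\mathbb{R}^n}\big|\theta_t(\mathbf{1}_{R^{(i)}\setminus R^{(i-1)}}\Delta_{R^{(i)}}f)(y)\big|^2\Big(\frac{t}{t+|x-y|}\Big)^{m\lambda}\frac{d\mu(y)}{t^m}\right)^{1/2}\le C\,2^{-\frac{\alpha}{2}i}\,2^{-(k+i)m}\,\|\Delta_{R^{(i)}}f\|_{L^1(\mu)},$$ where $C$ is independent of $R,k,i,x,t,f$.
   Context: Measure and kernel: $n\ge1$, $m>0$; $\mu$ is a Borel measure on $\mathbb{R}^n$ with $\mu(B(x,r))\le C r^m$ for all $x$, $r>0$; distances, balls and cubes use the $\ell^\infty$ metric $|x-y|=\max_i|x_i-y_i|$. Fix $\lambda>2$ and $0<\alpha\le m(\lambda-2)/2$. The kernel $s_t:\mathbb{R}^n\times\mathbb{R}^n\to\mathbb{C}$ ($t>0$) satisfies $|s_t(x,y)|\le C t^\alpha/(t+|x-y|)^{m+\alpha}$ and $|s_t(x,y)-s_t(x,y')|\le C|y-y'|^\alpha/(t+|x-y|)^{m+\alpha}$ whenever $|y-y'|<t/2$; $\theta_t f(y)=\int s_t(y,z)f(z)\,d\mu(z)$. Dyadic grid: for a fixed sequence $\beta=(\beta_j)_{j\in\mathbb{Z}}$, $\beta_j\in\{0,1\}^n$, let $\mathcal{D}=\bigcup_{k\in\mathbb{Z}}\mathcal{D}_k$,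 $\mathcal{D}_k=\{2^k([0,1)^n+v)+\sum_{j<k}2^j\beta_j: v\in\mathbb{Z}^n\}$ (cubes of side $2^k$). For $Q\in\mathcal{D}$, $\ell(Q)$ is its side length, $\operatorname{ch}(Q)$ its $2^n$ dyadic children, and $Q^{(k)}$ the unique cube of $\mathcal{D}$ with $\ell(Q^{(k)})=2^k\ell(Q)$ and $Q\subset Q^{(k)}$. Fix an integer $r\ge1$ and $\gamma\in(0,1/2)$ with $\gamma\le \frac{\alpha}{2(m+\alpha)}$ and $\frac{m\gamma}{1-\gamma}\le\frac{\alpha}{4}$. A cube $I\in\mathcal{D}$ is bad if there is $J\in\mathcal{D}$ with $\ell(J)\ge 2^r\ell(I)$ and $\operatorname{dist}(I,\partial J)\le\ell(I)^\gamma\ell(J)^{1-\gamma}$; otherwise it is good. $W_R=R\times(\ell(R)/2,\ell(R)]$. Twisted martingale differences: let $1<p\le2$, $p'=p/(p-1)$. For each cube $Q$ let $b_Q$ satisfy $\operatorname{supp}b_Q\subset Q$, $\langle b_Q\rangle_Q=1$ and $\|b_Q\|^p_{L^p(\mu)}\le A\mu(Q)$, where $\langle h\rangle_Q=\mu(Q)^{-1}\int_Q h\,d\mu$ and $A$ is a fixed constant. Fix $s\in\mathbb{Z}$ and $Q^*\in\mathcal{D}$ with $\ell(Q^* )=2^s$. Stopping cubes: $\mathcal{F}^0=\{Q^*\}$; given $\mathcal{F}^j$, $\mathcal{F}^{j+1}$ consists, for each $F\in\mathcal{F}^j$, of the maximal cubes $Q\in\mathcal{D}$, $Q\subsetneq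 F$, with $|\langle b_F\rangle_Q|<1/2$ or $\langle|b_F|^p\rangle_Q>2^{p'+1}A^{p'}$; $\mathcal{F}_{Q^*}=\bigcup_j\mathcal{F}^j$. For $Q\in\mathcal{D}$, $Q\subset Q^*$, $Q^a$ is the minimal $F\in\mathcal{F}_{Q^*}$ with $Q\subset F$. For $f\in L^1_{loc}(\mu)$ and $Q\subset Q^*$, $$\Delta_Q f=\sum_{Q'\in\operatorname{ch}(Q)}\Big[\frac{\langle f\rangle_{Q'}}{\langle b_{(Q')^a}\rangle_{Q'}}b_{(Q')^a}-\frac{\langle f\rangle_Q}{\langle b_{Q^a}\rangle_Q}b_{Q^a}\Big]\mathbf{1}_{Q'},$$ except that for $Q=Q^*$ one adds the term $\langle f\rangle_{Q^*}b_{Q^*}$. *)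

theory Defs
  imports "HOL-Analysis.Analysis"
begin

definition linf_dist :: "real ^ 'n \<Rightarrow> real ^ 'n \<Rightarrow> real" where
  "linf_dist x y = Max (range (\<lambda>i. \<bar>x $ i - y $ i\<bar>))"

definition linf_ball :: "real ^ 'n \<Rightarrow> real \<Rightarrow> (real ^ 'n) set" where
  "linf_ball x r = {y. linf_dist x y < r}"

definition linf_setdist :: "(real ^ 'n) set \<Rightarrow> (real ^ 'n) set \<Rightarrow> real" where
  "linf_setdist A B = Inf {linf_dist x y | x y. x \<in> A \<and> y \<in> B}"

text \<open>The shift \<open>\<Sum>_{j<k} 2^j \<beta>_j\<close>.\<close>
definition dshift :: "(int \<Rightarrow> real ^ 'n) \<Rightarrow> int \<Rightarrow> real ^ 'n" where
  "dshift beta k = (\<Sum>j. ((2::real) powr (real_of_int k - 1 - real j)) *\<^sub>R beta (k - 1 - int j))"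

text \<open>The cube \<open>2^k([0,1)^n + v) + \<Sum>_{j<k} 2^j \<beta>_j\<close>.\<close>
definition dcube :: "(int \<Rightarrow> real ^ 'n) \<Rightarrow> int \<Rightarrow> int ^ 'n \<Rightarrow> (real ^ 'n) set" where
  "dcube beta k v = {x. \<forall>i. (2::real) powr k * of_int (v $ i) + dshift beta k $ i \<le> x $ i
                          \<and> x $ i < (2::real) powr k * (of_int (v $ i) + 1) + dshift beta k $ i}"

definition Dk :: "(int \<Rightarrow> real ^ 'n) \<Rightarrow> int \<Rightarrow> (real ^ 'n) set set" where
  "Dk beta k = range (dcube beta k)"

definition dyadic :: "(int \<Rightarrow> real ^ 'n) \<Rightarrow> (real ^ 'n) set set" where
  "dyadic beta = (\<Union>k. Dk beta k)"

definition dlevel :: "(int \<Rightarrow> real ^ 'n) \<Rightarrow> (real ^ 'n) set \<Rightarrow> int" where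
  "dlevel beta Q = (THE k. Q \<in> Dk beta k)"

definition side :: "(int \<Rightarrow> real ^ 'n) \<Rightarrow> (real ^ 'n) set \<Rightarrow> real" where
  "side beta Q = (2::real) powr (dlevel beta Q)"

definition children :: "(int \<Rightarrow> real ^ 'n) \<Rightarrow> (real ^ 'n) set \<Rightarrow> (real ^ 'n) set set" where
  "children beta Q = {Q' \<in> Dk beta (dlevel beta Q - 1). Q' \<subseteq> Q}"

definition anc :: "(int \<Rightarrow> real ^ 'n) \<Rightarrow> nat \<Rightarrow> (real ^ 'n) set \<Rightarrow> (real ^ 'n) set" where
  "anc beta j Q = (THE P. P \<in> Dk beta (dlevel beta Q + int j) \<and> Q \<subseteq> P)"

definition bad :: "(int \<Rightarrow> real ^ 'n) \<Rightarrow> nat \<Rightarrow> real \<Rightarrow> (real ^ 'n) set \<Rightarrow> bool" where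
  "bad beta r \<gamma> I = (\<exists>J \<in> dyadic beta. side beta J \<ge> 2 ^ r * side beta I \<and>
      linf_setdist I (frontier J) \<le> side beta I powr \<gamma> * side beta J powr (1 - \<gamma>))"

definition good :: "(int \<Rightarrow> real ^ 'n) \<Rightarrow> nat \<Rightarrow> real \<Rightarrow> (real ^ 'n) set \<Rightarrow> bool" where
  "good beta r \<gamma> I = (I \<in> dyadic beta \<and> \<not> bad beta r \<gamma> I)"

definition avg :: "'a measure \<Rightarrow> 'a set \<Rightarrow> ('a \<Rightarrow> 'b::{banach, second_countable_topology}) \<Rightarrow> 'b" where
  "avg mu Q h = inverse (measure mu Q) *\<^sub>R (LINT x:Q|mu. h x)"

definition loc_integrable :: "(real ^ 'n) measure \<Rightarrow> (real ^ 'n \<Rightarrow> complex) \<Rightarrow> bool" where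
  "loc_integrable mu f \<longleftrightarrow> f \<in> borel_measurable mu \<and> (\<forall>K. compact K \<longrightarrow> set_integrable mu K f)"

definition theta :: "(real ^ 'n) measure \<Rightarrow> (real \<Rightarrow> real ^ 'n \<Rightarrow> real ^ 'n \<Rightarrow> complex)
                      \<Rightarrow> real \<Rightarrow> (real ^ 'n \<Rightarrow> complex) \<Rightarrow> real ^ 'n \<Rightarrow> complex" where
  "theta mu s t g y = (LINT z|mu. s t y z * g z)"

definition stop_cond :: "'a measure \<Rightarrow> real \<Rightarrow> real \<Rightarrow> ('a \<Rightarrow> complex) \<Rightarrow> 'a set \<Rightarrow> bool" where
  "stop_cond mu A p bF Q \<longleftrightarrow>
     norm (avg mu Q bF) < 1/2 \<or>
     avg mu Q (\<lambda>x. norm (bF x) powr p) > 2 powr (p / (p - 1) + 1) * A powr (p / (p - 1))"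

primrec stop_gen :: "(int \<Rightarrow> real ^ 'n) \<Rightarrow> (real ^ 'n) measure \<Rightarrow> ((real ^ 'n) set \<Rightarrow> real ^ 'n \<Rightarrow> complex)
     \<Rightarrow> real \<Rightarrow> real \<Rightarrow> (real ^ 'n) set \<Rightarrow> nat \<Rightarrow> (real ^ 'n) set set" where
  "stop_gen beta mu b A p Qs 0 = {Qs}"
| "stop_gen beta mu b A p Qs (Suc j) =
     {Q. \<exists>F \<in> stop_gen beta mu b A p Qs j.
           Q \<in> dyadic beta \<and> Q \<subset> F \<and> stop_cond mu A p (b F) Q \<and>
           \<not> (\<exists>Q' \<in> dyadic beta. Q \<subset> Q' \<and> Q' \<subset> F \<and> stop_cond mu A p (b F) Q')}"

definition stopping where
  "stopping beta mu b A p Qs = (\<Union>j. stop_gen beta mu b A p Qs j)"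

definition stop_parent where
  "stop_parent beta mu b A p Qs Q =
     (THE F. F \<in> stopping beta mu b A p Qs \<and> Q \<subseteq> F \<and>
        (\<forall>F' \<in> stopping beta mu b A p Qs. Q \<subseteq> F' \<longrightarrow> F \<subseteq> F'))"

definition tDelta :: "(int \<Rightarrow> real ^ 'n) \<Rightarrow> (real ^ 'n) measure \<Rightarrow> ((real ^ 'n) set \<Rightarrow> real ^ 'n \<Rightarrow> complex)
     \<Rightarrow> real \<Rightarrow> real \<Rightarrow> (real ^ 'n) set \<Rightarrow> (real ^ 'n) set \<Rightarrow> (real ^ 'n \<Rightarrow> complex) \<Rightarrow> real ^ 'n \<Rightarrow> complex" where
  "tDelta beta mu b A p Qs Q f x =
     (\<Sum>Q' \<in> children beta Q.
        indicator Q' x *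
          (avg mu Q' f / avg mu Q' (b (stop_parent beta mu b A p Qs Q')) * b (stop_parent beta mu b A p Qs Q') x
           - avg mu Q f / avg mu Q (b (stop_parent beta mu b A p Qs Q)) * b (stop_parent beta mu b A p Qs Q) x))
     + (if Q = Qs then avg mu Qs f * b Qs x else 0)"

end

theory Submission
  imports Defs "HOL-Analysis.Analysis"
begin


definition idx :: "(int \<Rightarrow> real ^ 'n) \<Rightarrow> int \<Rightarrow> real ^ 'n \<Rightarrow> int ^ 'n" where
  "idx beta k x = (\<chi> i. \<lfloor>(x $ i - dshift beta k $ i) / 2 powr k\<rfloor>)"

lemma dshift_summable:
  assumes b01: "\<And>j i. beta j $ i \<in> {0, 1}"
  shows "summable (\<lambda>j. ((2::real) powr (real_of_int k - 1 - real j)) *\<^sub>R (beta (k - 1 - int j) :: real ^ 'n))"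
proof (rule summable_comparison_test[where g = "\<lambda>j. (2 powr (real_of_int k - 1) * real CARD('n)) * (1/2)^j"])
  show "summable (\<lambda>j. (2 powr (real_of_int k - 1) * real CARD('n)) * (1/2::real)^j)"
    by (intro summable_mult summable_geometric) simp
  show "\<exists>N. \<forall>n\<ge>N. norm (2 powr (real_of_int k - 1 - real n) *\<^sub>R beta (k - 1 - int n)) \<le> 2 powr (real_of_int k - 1) * real CARD('n) * (1 / 2) ^ n"
  proof (intro exI allI impI)
    fix n :: nat
    have nb: "norm (beta (k - 1 - int n)) \<le> real CARD('n)"
    proof -
      have "norm (beta (k - 1 - int n)) \<le> (\<Sum>i\<in>UNIV. \<bar>beta (k - 1 - int n) $ i\<bar>)"
        by (rule norm_le_l1_cart)
      also have "\<dots> \<le> (\<Sum>i\<in>(UNIV::'n set). 1)"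
      proof (intro sum_mono)
        fix i show "\<bar>beta (k - 1 - int n) $ i\<bar> \<le> 1" using b01[of "k - 1 - int n" i] by auto
      qed
      finally show ?thesis by simp
    qed
    have "2 powr (real_of_int k - 1 - real n) = 2 powr (real_of_int k - 1) * (1/2)^n"
      by (simp add: powr_diff powr_realpow divide_simps)
    then show "norm (2 powr (real_of_int k - 1 - real n) *\<^sub>R beta (k - 1 - int n)) \<le> 2 powr (real_of_int k - 1) * real CARD('n) * (1 / 2) ^ n"
      using nb by (simp add: mult_left_mono)
  qed
qed

lemma dshift_succ:
  assumes b01: "\<And>j i. beta j $ i \<in> {0, 1}"
  shows "dshift beta (k + 1) = dshift beta k + (2 powr real_of_int k) *\<^sub>R (beta k :: real ^ 'n)"
proof -
  let ?f = "\<lambda>j. ((2::real) powr (real_of_int (k+1) - 1 - real j)) *\<^sub>R (beta (k + 1 - 1 - int j) :: real ^ 'n)"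
  have s: "summable ?f" using dshift_summable[where beta=beta, OF b01, of "k+1"] by simp
  have "(\<Sum>j. ?f (Suc j)) = suminf ?f - ?f 0" by (rule suminf_split_head[OF s])
  moreover have "(\<lambda>j. ?f (Suc j)) = (\<lambda>j. ((2::real) powr (real_of_int k - 1 - real j)) *\<^sub>R (beta (k - 1 - int j)))"
    by (auto simp: algebra_simps)
  ultimately have "dshift beta k = dshift beta (k+1) - ?f 0"
    unfolding dshift_def by simp
  then show ?thesis by simp
qed

lemma mem_dcube: "x \<in> dcube beta k v \<longleftrightarrow> idx beta k x = v"
proof -
  have "(2 powr k * of_int (v $ i) + dshift beta k $ i \<le> x $ i \<and>
         x $ i < 2 powr k * (of_int (v $ i) + 1) + dshift beta k $ i) \<longleftrightarrow>
        \<lfloor>(x $ i - dshift beta k $ i) / 2 powr k\<rfloor> = v $ i" for i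
    by (simp add: floor_eq_iff pos_le_divide_eq pos_divide_less_eq algebra_simps)
  then show ?thesis unfolding dcube_def idx_def
    by (auto simp: vec_eq_iff)
qed

lemma idx_succ:
  assumes b01: "\<And>j i. beta j $ i \<in> {0, 1}"
  shows "idx beta (k+1) x $ i = (idx beta k x $ i - \<lfloor>beta k $ i\<rfloor>) div 2"
proof -
  have bi: "beta k $ i = of_int \<lfloor>beta k $ i\<rfloor>" using b01[of k i] by auto
  have "(x $ i - dshift beta (k+1) $ i) / 2 powr real_of_int (k+1)
        = ((x $ i - dshift beta k $ i) / 2 powr real_of_int k - of_int \<lfloor>beta k $ i\<rfloor>) / real_of_int 2"
  proof -
    have ds: "dshift beta (k+1) $ i = dshift beta k $ i + 2 powr k * beta k $ i"
      by (simp add: dshift_succ[where beta=beta, OF b01])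
    show ?thesis apply (subst ds) using bi by (simp add: powr_add divide_simps algebra_simps)
  qed
  then have "idx beta (k+1) x $ i = \<lfloor>((x $ i - dshift beta k $ i) / 2 powr real_of_int k - of_int \<lfloor>beta k $ i\<rfloor>) / real_of_int 2\<rfloor>"
    by (simp only: idx_def vec_lambda_beta)
  also have "\<dots> = \<lfloor>(x $ i - dshift beta k $ i) / 2 powr real_of_int k - of_int \<lfloor>beta k $ i\<rfloor>\<rfloor> div 2"
    by (rule floor_divide_real_eq_div) simp
  finally have "idx beta (k+1) x $ i = \<lfloor>(x $ i - dshift beta k $ i) / 2 powr real_of_int k - of_int \<lfloor>beta k $ i\<rfloor>\<rfloor> div 2" .
  then show ?thesis unfolding idx_def by simp
qed

lemma idx_mono_eq:
  assumes b01: "\<And>j i. beta j $ i \<in> {0, 1}"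
    and "idx beta k x = idx beta k y"
  shows "idx beta (k + int j) x = idx beta (k + int j) y"
proof (induction j)
  case 0 then show ?case using assms(2) by simp
next
  case (Suc j)
  have "idx beta (k + int j + 1) x $ i = idx beta (k + int j + 1) y $ i" for i
    using Suc by (simp add: idx_succ[where beta=beta, OF b01])
  then have "idx beta (k + int j + 1) x = idx beta (k + int j + 1) y" by (simp add: vec_eq_iff)
  moreover have "k + int (Suc j) = k + int j + 1" by simp
  ultimately show ?case by metis
qed

lemma idx_mono_eq':
  assumes b01: "\<And>j i. beta j $ i \<in> {0, 1}"
    and "idx beta k x = idx beta k y" "k \<le> k'"
  shows "idx beta k' x = idx beta k' y"
proof -
  have "k' = k + int (nat (k' - k))" using assms(3) by simp
  then show ?thesis using idx_mono_eq[where beta=beta, OF b01 assms(2), of "nat (k'-k)"] by metis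
qed

definition corner :: "(int \<Rightarrow> real ^ 'n) \<Rightarrow> int \<Rightarrow> int ^ 'n \<Rightarrow> real ^ 'n" where
  "corner beta k w = (\<chi> i. 2 powr k * of_int (w $ i) + dshift beta k $ i)"

lemma idx_corner: "idx beta k (corner beta k w) = w"
  by (simp add: idx_def corner_def vec_eq_iff)

lemma corner_in: "corner beta k w \<in> dcube beta k w"
  by (simp add: mem_dcube idx_corner)

lemma dcube_nonempty: "dcube beta k w \<noteq> {}"
  using corner_in by blast

lemma div2_aux: "(if even (n::int) then n + 1 else n - 1) div 2 = n div 2"
proof (cases "even n")
  case True
  then obtain q where q: "n = 2 * q" by (rule evenE)
  show ?thesis using True unfolding q by simp
next
  case False
  then obtain q where q: "n = 2 * q + 1" by (rule oddE)
  show ?thesis using False unfolding q by simp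
qed

lemma ne_aux: "(if even (n::int) then n + 1 else n - 1) \<noteq> n" by auto

lemma dcube_level_lt:
  assumes b01: "\<And>j i. beta j $ i \<in> {0, 1}"
    and eq: "dcube beta k v = dcube beta k' v'" and lt: "k < k'"
  shows False
proof -
  define x where "x = corner beta k v"
  define h where "h = (\<lambda>n::int. if even n then n + 1 else n - 1)"
  define w where "w = (\<chi> i. \<lfloor>beta k $ i\<rfloor> + h (v $ i - \<lfloor>beta k $ i\<rfloor>))"
  define y where "y = corner beta k w"
  have ix: "idx beta k x = v" and iy: "idx beta k y = w" by (simp_all add: x_def y_def idx_corner)
  have wi: "w $ i - \<lfloor>beta k $ i\<rfloor> = h (v $ i - \<lfloor>beta k $ i\<rfloor>)" for i
    unfolding w_def by simp
  have "idx beta (k+1) y $ i = idx beta (k+1) x $ i" for i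
  proof -
    have "(w $ i - \<lfloor>beta k $ i\<rfloor>) div 2 = (v $ i - \<lfloor>beta k $ i\<rfloor>) div 2"
      unfolding wi h_def by (rule div2_aux)
    then show ?thesis by (simp only: idx_succ[where beta=beta, OF b01] ix iy)
  qed
  then have "idx beta (k+1) y = idx beta (k+1) x" by (simp add: vec_eq_iff)
  then have "idx beta k' y = idx beta k' x" using idx_mono_eq'[where beta=beta, OF b01, where k="k+1" and x=y and y=x and k'=k'] lt by simp
  moreover have "idx beta k' x = v'"
    using eq corner_in[of beta k v] by (simp add: x_def mem_dcube)
  ultimately have "y \<in> dcube beta k' v'" by (simp add: mem_dcube)
  then have "y \<in> dcube beta k v" using eq by simp
  then have "w = v" by (simp add: mem_dcube iy)
  then have "w $ i - \<lfloor>beta k $ i\<rfloor> = v $ i - \<lfloor>beta k $ i\<rfloor>" for i by simp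
  then have "h (v $ i - \<lfloor>beta k $ i\<rfloor>) = v $ i - \<lfloor>beta k $ i\<rfloor>" for i by (simp only: wi)
  then show False unfolding h_def using ne_aux by blast
qed

lemma dcube_level_eq:
  assumes b01: "\<And>j i. beta j $ i \<in> {0, 1}"
    and eq: "dcube beta k v = dcube beta k' v'"
  shows "k = k'"
proof (rule ccontr)
  assume "k \<noteq> k'"
  then have "k < k' \<or> k' < k" by arith
  then show False using dcube_level_lt[where beta=beta, OF b01 eq] dcube_level_lt[where beta=beta, OF b01 eq[symmetric]] by blast
qed

lemma dlevel_dcube:
  assumes b01: "\<And>j i. beta j $ i \<in> {0, 1}"
  shows "dlevel beta (dcube beta k v) = k"
  unfolding dlevel_def
proof (rule the_equality)
  show "dcube beta k v \<in> Dk beta k" by (simp add: Dk_def)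
  fix k' assume "dcube beta k v \<in> Dk beta k'"
  then obtain v' where e: "dcube beta k v = dcube beta k' v'" by (auto simp: Dk_def)
  show "k' = k" using dcube_level_eq[where beta=beta, OF b01 e] by simp
qed

lemma dlevel_Dk:
  assumes b01: "\<And>j i. beta j $ i \<in> {0, 1}" and "Q \<in> Dk beta k"
  shows "dlevel beta Q = k"
  using assms(2) dlevel_dcube[where beta=beta, OF b01] by (auto simp: Dk_def)

lemma Dk_cube_of:
  assumes "F \<in> Dk beta k" "x \<in> F"
  shows "F = dcube beta k (idx beta k x)"
proof -
  obtain v where F: "F = dcube beta k v" using assms(1) by (auto simp: Dk_def)
  then have "idx beta k x = v" using assms(2) by (simp add: mem_dcube)
  then show ?thesis using F by simp
qed

lemma cube_mono:
  assumes b01: "\<And>j i. beta j $ i \<in> {0, 1}" and "k \<le> k'"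
  shows "dcube beta k (idx beta k x) \<subseteq> dcube beta k' (idx beta k' x)"
proof
  fix y assume "y \<in> dcube beta k (idx beta k x)"
  then have "idx beta k y = idx beta k x" by (simp add: mem_dcube)
  then have "idx beta k' y = idx beta k' x" using idx_mono_eq'[where beta=beta, OF b01 _ assms(2)] by blast
  then show "y \<in> dcube beta k' (idx beta k' x)" by (simp add: mem_dcube)
qed

lemma anc_eq:
  assumes b01: "\<And>j i. beta j $ i \<in> {0, 1}" and R: "R \<in> Dk beta k" and x: "x \<in> R"
  shows "anc beta j R = dcube beta (k + int j) (idx beta (k + int j) x)"
proof -
  have RR: "R = dcube beta k (idx beta k x)" by (rule Dk_cube_of[OF R x])
  have sub: "R \<subseteq> dcube beta (k + int j) (idx beta (k + int j) x)"
    using cube_mono[where beta=beta, OF b01, of k "k + int j" x] RR by simp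
  show ?thesis unfolding anc_def dlevel_Dk[where beta=beta, OF b01 R]
  proof (rule the_equality)
    show "dcube beta (k + int j) (idx beta (k + int j) x) \<in> Dk beta (k + int j) \<and>
          R \<subseteq> dcube beta (k + int j) (idx beta (k + int j) x)"
      using sub by (simp add: Dk_def)
    fix P assume P: "P \<in> Dk beta (k + int j) \<and> R \<subseteq> P"
    then have "x \<in> P" using x by blast
    then show "P = dcube beta (k + int j) (idx beta (k + int j) x)"
      using Dk_cube_of P by blast
  qed
qed

lemma anc_props:
  assumes b01: "\<And>j i. beta j $ i \<in> {0, 1}" and R: "R \<in> Dk beta k"
  shows "anc beta j R \<in> Dk beta (k + int j)" "R \<subseteq> anc beta j R"
proof -
  obtain v where v: "R = dcube beta k v" using R by (auto simp: Dk_def)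
  obtain x where x: "x \<in> R" using dcube_nonempty v by blast
  have e: "anc beta j R = dcube beta (k + int j) (idx beta (k + int j) x)" by (rule anc_eq[where beta=beta, OF b01 R x])
  show "anc beta j R \<in> Dk beta (k + int j)" unfolding e by (simp add: Dk_def)
  have RR: "R = dcube beta k (idx beta k x)" by (rule Dk_cube_of[OF R x])
  show "R \<subseteq> anc beta j R" unfolding e using cube_mono[where beta=beta, OF b01, of k "k + int j" x] RR by simp
qed



lemma Dk_dyadic: "Q \<in> Dk beta k \<Longrightarrow> Q \<in> dyadic beta"
  by (auto simp: dyadic_def)

lemma dyadic_Dk:
  assumes b01: "\<And>j i. beta j $ i \<in> {0, 1}" and "Q \<in> dyadic beta"
  shows "Q \<in> Dk beta (dlevel beta Q)"
proof -
  obtain k where "Q \<in> Dk beta k" using assms(2) by (auto simp: dyadic_def)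
  then show ?thesis using dlevel_Dk[where beta=beta, OF b01] by simp
qed

lemma side_Dk:
  assumes b01: "\<And>j i. beta j $ i \<in> {0, 1}" and "Q \<in> Dk beta k"
  shows "side beta Q = 2 powr k"
  using dlevel_Dk[where beta=beta, OF b01 assms(2)] by (simp add: side_def)

lemma Dk_nonempty: "Q \<in> Dk beta k \<Longrightarrow> Q \<noteq> {}"
  using dcube_nonempty by (auto simp: Dk_def)

lemma sub_of_level:
  assumes b01: "\<And>j i. beta j $ i \<in> {0, 1}"
    and F: "F \<in> Dk beta k" and F': "F' \<in> Dk beta k'" and x: "x \<in> F" "x \<in> F'" and le: "k \<le> k'"
  shows "F \<subseteq> F'"
  using Dk_cube_of[OF F x(1)] Dk_cube_of[OF F' x(2)] cube_mono[where beta=beta, OF b01 le, of x] by simp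

lemma sub_level:
  assumes b01: "\<And>j i. beta j $ i \<in> {0, 1}"
    and Q: "Q \<in> Dk beta k" and F: "F \<in> Dk beta k'" and sub: "Q \<subseteq> F"
  shows "k \<le> k'"
proof (rule ccontr)
  assume "\<not> k \<le> k'"
  then have lt: "k' \<le> k" by simp
  obtain x where x: "x \<in> Q" using Dk_nonempty[OF Q] by blast
  have "F \<subseteq> Q" using sub_of_level[where beta=beta, OF b01 F Q _ x lt] x sub by blast
  then have "F = Q" using sub by blast
  then have "k = k'" using dlevel_Dk[where beta=beta, OF b01 Q] dlevel_Dk[where beta=beta, OF b01 F] by simp
  then show False using \<open>\<not> k \<le> k'\<close> by simp
qed

lemma stop_gen_props:
  assumes Qs: "Qs \<in> dyadic beta"
  shows "F \<in> stop_gen beta mu b A p Qs j \<Longrightarrow> F \<in> dyadic beta \<and> F \<subseteq> Qs"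
proof (induction j arbitrary: F)
  case 0 then show ?case using Qs by simp
next
  case (Suc j)
  then obtain F0 where "F0 \<in> stop_gen beta mu b A p Qs j" "F \<in> dyadic beta" "F \<subset> F0" by auto
  then show ?case using Suc.IH by blast
qed

lemma stopping_props:
  assumes "Qs \<in> dyadic beta" "F \<in> stopping beta mu b A p Qs"
  shows "F \<in> dyadic beta" "F \<subseteq> Qs"
  using assms stop_gen_props[OF assms(1)] unfolding stopping_def by blast+

lemma Qs_stopping: "Qs \<in> stopping beta mu b A p Qs"
  unfolding stopping_def by (metis UNIV_I UN_I insertI1 stop_gen.simps(1))

lemma stop_parent_dyadic:
  assumes b01: "\<And>j i. beta j $ i \<in> {0, 1}"
    and Qs: "Qs \<in> dyadic beta" and Q: "Q \<in> dyadic beta" and QQs: "Q \<subseteq> Qs"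
  shows "stop_parent beta mu b A p Qs Q \<in> dyadic beta"
proof -
  let ?S = "stopping beta mu b A p Qs"
  define T where "T = {F \<in> ?S. Q \<subseteq> F}"
  define l where "l = dlevel beta Q"
  have QD: "Q \<in> Dk beta l" unfolding l_def by (rule dyadic_Dk[where beta=beta, OF b01 Q])
  obtain x where x: "x \<in> Q" using Dk_nonempty[OF QD] by blast
  have TD: "F \<in> Dk beta (dlevel beta F)" if "F \<in> T" for F
    using that stopping_props[OF Qs] dyadic_Dk[where beta=beta, OF b01] unfolding T_def by blast
  have Tl: "l \<le> dlevel beta F" if "F \<in> T" for F
    using sub_level[where beta=beta, OF b01 QD TD[OF that]] that unfolding T_def by blast
  have ex: "\<exists>n. \<exists>F\<in>T. dlevel beta F = l + int n"
  proof -
    have "Qs \<in> T" using Qs_stopping QQs unfolding T_def by blast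
    then show ?thesis using Tl[of Qs] by (intro exI[of _ "nat (dlevel beta Qs - l)"]) auto
  qed
  define n0 where "n0 = (LEAST n. \<exists>F\<in>T. dlevel beta F = l + int n)"
  obtain F0 where F0: "F0 \<in> T" "dlevel beta F0 = l + int n0"
    using LeastI_ex[OF ex] unfolding n0_def by blast
  have min: "F0 \<subseteq> F'" if "F' \<in> T" for F'
  proof -
    have "dlevel beta F' = l + int (nat (dlevel beta F' - l))" using Tl[OF that] by simp
    then have "n0 \<le> nat (dlevel beta F' - l)" unfolding n0_def using that by (intro Least_le) blast
    then have le: "dlevel beta F0 \<le> dlevel beta F'" using F0(2) Tl[OF that] by linarith
    have "x \<in> F0" "x \<in> F'" using x F0(1) that unfolding T_def by blast+
    then show ?thesis using sub_of_level[where beta=beta, OF b01 TD[OF F0(1)] TD[OF that] _ _ le] by blast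
  qed
  have "stop_parent beta mu b A p Qs Q = F0"
    unfolding stop_parent_def
  proof (rule the_equality)
    show "F0 \<in> ?S \<and> Q \<subseteq> F0 \<and> (\<forall>F'\<in>?S. Q \<subseteq> F' \<longrightarrow> F0 \<subseteq> F')"
      using F0(1) min unfolding T_def by blast
    fix F assume "F \<in> ?S \<and> Q \<subseteq> F \<and> (\<forall>F'\<in>?S. Q \<subseteq> F' \<longrightarrow> F \<subseteq> F')"
    then show "F = F0" using F0(1) min unfolding T_def by blast
  qed
  then show ?thesis using F0(1) stopping_props[OF Qs] unfolding T_def by blast
qed



lemma linf_fin: "finite (range (f :: 'n::finite \<Rightarrow> real))" by simp

lemma linf_ge: "\<bar>x $ i - y $ i\<bar> \<le> linf_dist x y"
  unfolding linf_dist_def by (rule Max_ge) auto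

lemma linf_le: "(\<And>i. \<bar>x $ i - y $ i\<bar> \<le> c) \<Longrightarrow> linf_dist x y \<le> c"
  unfolding linf_dist_def by (subst Max_le_iff) auto

lemma linf_nonneg: "0 \<le> linf_dist x y"
  using linf_ge[of x _ y] abs_ge_zero order_trans by blast

lemma linf_sym: "linf_dist x y = linf_dist y x"
  unfolding linf_dist_def by (simp add: abs_minus_commute)

lemma linf_tri: "linf_dist x z \<le> linf_dist x y + linf_dist y z"
proof (rule linf_le)
  fix i
  have "\<bar>x $ i - z $ i\<bar> \<le> \<bar>x $ i - y $ i\<bar> + \<bar>y $ i - z $ i\<bar>" by simp
  also have "\<dots> \<le> linf_dist x y + linf_dist y z" using linf_ge by (intro add_mono) auto
  finally show "\<bar>x $ i - z $ i\<bar> \<le> linf_dist x y + linf_dist y z" .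
qed

lemma linf_le_norm: "linf_dist x y \<le> norm (x - y)"
  by (rule linf_le) (metis component_le_norm_cart vector_minus_component)

lemma linf_lipschitz: "\<bar>linf_dist x y - linf_dist x y'\<bar> \<le> norm (y - y')"
proof -
  have "linf_dist x y \<le> linf_dist x y' + linf_dist y' y" by (rule linf_tri)
  moreover have "linf_dist x y' \<le> linf_dist x y + linf_dist y y'" by (rule linf_tri)
  moreover have "linf_dist y' y \<le> norm (y - y')" using linf_le_norm[of y' y] by (simp add: norm_minus_commute)
  moreover have "linf_dist y y' \<le> norm (y - y')" by (rule linf_le_norm)
  ultimately show ?thesis by linarith
qed

lemma linf_continuous: "continuous_on UNIV (linf_dist x)"
proof -
  have "lipschitz_on 1 UNIV (linf_dist x)"
    by (rule lipschitz_onI) (use linf_lipschitz in \<open>auto simp: dist_real_def dist_norm\<close>)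
  then show ?thesis by (rule lipschitz_on_continuous_on)
qed

lemma linf_measurable[measurable]: "linf_dist x \<in> borel_measurable borel"
  using linf_continuous by (rule borel_measurable_continuous_onI)

lemma linf_ball_open: "open (linf_ball x r)"
  unfolding linf_ball_def
  by (rule open_Collect_less) (auto intro: linf_continuous continuous_on_const)

lemma linf_ball_borel[measurable]: "linf_ball x r \<in> sets borel"
  by (intro borel_open linf_ball_open)

lemma setdist_le:
  assumes "x \<in> A" "w \<in> B"
  shows "linf_setdist A B \<le> linf_dist x w"
  unfolding linf_setdist_def
proof (rule cInf_lower)
  show "linf_dist x w \<in> {linf_dist x y |x y. x \<in> A \<and> y \<in> B}" using assms by blast
  show "bdd_below {linf_dist x y |x y. x \<in> A \<and> y \<in> B}"
    by (rule bdd_belowI[of _ 0]) (auto simp: linf_nonneg)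
qed

lemma cross_frontier:
  assumes "x \<in> J" "z \<notin> J"
  shows "linf_setdist R (frontier J) \<le> linf_dist x z \<or> x \<notin> R"
proof -
  have "closed_segment x z \<inter> frontier J \<noteq> {}"
    by (rule connected_Int_frontier) (use assms in auto)
  then obtain w where w: "w \<in> closed_segment x z" "w \<in> frontier J" by blast
  then obtain u where u: "0 \<le> u" "u \<le> 1" "w = (1 - u) *\<^sub>R x + u *\<^sub>R z"
    unfolding closed_segment_def by blast
  have "linf_dist x w \<le> linf_dist x z"
  proof (rule linf_le)
    fix i
    have "w $ i = (1 - u) * x $ i + u * z $ i" using u(3) by simp
    then have "x $ i - w $ i = u * (x $ i - z $ i)" by (simp add: algebra_simps)
    then have "\<bar>x $ i - w $ i\<bar> = u * \<bar>x $ i - z $ i\<bar>" using u(1) by (simp add: abs_mult)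
    also have "\<dots> \<le> \<bar>x $ i - z $ i\<bar>" using u by (simp add: mult_left_le_one_le)
    also have "\<dots> \<le> linf_dist x z" by (rule linf_ge)
    finally show "\<bar>x $ i - w $ i\<bar> \<le> linf_dist x z" .
  qed
  then show ?thesis using setdist_le[of x R w "frontier J"] w by force
qed

lemma good_dist:
  assumes b01: "\<And>j i. beta j $ i \<in> {0, 1}"
    and good: "good beta r \<gamma> R" and R: "R \<in> Dk beta k" and J: "J \<in> Dk beta (k + int j)"
    and rj: "r \<le> j" and RJ: "R \<subseteq> J" and x: "x \<in> R" and z: "z \<notin> J"
  shows "linf_dist x z > (2 powr k) powr \<gamma> * (2 powr (k + int j)) powr (1 - \<gamma>)"
proof -
  have sR: "side beta R = 2 powr k" by (rule side_Dk[where beta=beta, OF b01 R])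
  have sJ: "side beta J = 2 powr (k + int j)" by (rule side_Dk[where beta=beta, OF b01 J])
  have "side beta J \<ge> 2 ^ r * side beta R"
  proof -
    have "(2::real) ^ r \<le> 2 ^ j" using rj by (simp add: power_increasing)
    then have "(2::real) ^ r * 2 powr k \<le> 2 ^ j * 2 powr k" by simp
    also have "\<dots> = 2 powr (k + int j)" by (simp add: powr_add powr_realpow[symmetric] mult.commute)
    finally show ?thesis using sR sJ by simp
  qed
  then have "linf_setdist R (frontier J) > side beta R powr \<gamma> * side beta J powr (1 - \<gamma>)"
    using good Dk_dyadic[OF J] unfolding good_def bad_def by force
  moreover have "linf_setdist R (frontier J) \<le> linf_dist x z"
    using cross_frontier[of x J z R] x z RJ by blast
  ultimately show ?thesis using sR sJ by simp
qed



definition tailK :: "real \<Rightarrow> real \<Rightarrow> real \<Rightarrow> real" where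
  "tailK C m \<beta> = max C 0 * 2 powr \<beta> * (1 / (1 - 2 powr (m - \<beta>)))"

lemma pow_half_powr: "((1/2::real) ^ j) powr \<beta> = ((1/2) powr \<beta>) ^ j"
  by (simp add: powr_realpow[symmetric] powr_powr powr_power mult.commute)

lemma ennreal_term_le: "(f j :: ennreal) \<le> (\<Sum>i. f i)"
proof (rule ccontr)
  assume "\<not> f j \<le> (\<Sum>i. f i)"
  then have "(\<Sum>i. f i) < f j" by simp
  then have "f j < f j" by (rule ennreal_suminf_lessD)
  then show False by simp
qed

lemma tail_pointwise:
  assumes t: "t > 0" and \<beta>: "\<beta> \<ge> 0"
  shows "ennreal ((t / (t + linf_dist c y)) powr \<beta>) \<le>
    (\<Sum>j. ennreal (2 powr \<beta> * ((1/2) powr \<beta>) ^ j) * indicator (linf_ball c (2 ^ j * t)) y)"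
proof -
  let ?\<rho> = "linf_dist c y"
  have \<rho>0: "?\<rho> \<ge> 0" by (rule linf_nonneg)
  have ex: "\<exists>j. ?\<rho> / t < 2 ^ j" using real_arch_pow[of 2 "?\<rho> / t"] by simp
  define j where "j = (LEAST j. ?\<rho> / t < (2::real) ^ j)"
  have jin: "?\<rho> < 2 ^ j * t" using LeastI_ex[OF ex] t unfolding j_def by (simp add: pos_divide_less_eq)
  have bnd: "(t / (t + ?\<rho>)) powr \<beta> \<le> 2 powr \<beta> * ((1/2) powr \<beta>) ^ j"
  proof (cases j)
    case 0
    have "(t / (t + ?\<rho>)) powr \<beta> \<le> 1" using t \<rho>0 \<beta> by (intro powr_le1) auto
    also have "1 \<le> 2 powr \<beta>" using \<beta> powr_mono[of 0 \<beta> 2] by simp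
    finally show ?thesis using 0 by simp
  next
    case (Suc j')
    have "\<not> ?\<rho> / t < 2 ^ j'" unfolding j_def using Suc j_def not_less_Least by (metis lessI)
    then have "2 ^ j' * t \<le> ?\<rho>" using t by (simp add: pos_divide_less_eq not_less)
    then have "t * 2 ^ j' \<le> t + ?\<rho>" using t by (simp add: mult.commute)
    then have "t / (t + ?\<rho>) \<le> 1 / 2 ^ j'" using t \<rho>0
      by (simp add: divide_simps)
    then have "t / (t + ?\<rho>) \<le> (1/2) ^ j'" by (simp add: power_divide)
    then have "(t / (t + ?\<rho>)) powr \<beta> \<le> ((1/2) ^ j') powr \<beta>" using t \<rho>0 \<beta> by (intro powr_mono2) auto
    also have "\<dots> = ((1/2) powr \<beta>) ^ j'" by (rule pow_half_powr)
    also have "\<dots> = 2 powr \<beta> * ((1/2) powr \<beta>) ^ j"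
    proof -
      have "2 powr \<beta> * (1/2) powr \<beta> = (1::real)" by (simp add: powr_mult[symmetric])
      then show ?thesis using Suc by (simp add: mult.assoc[symmetric])
    qed
    finally show ?thesis .
  qed
  have "ennreal ((t / (t + ?\<rho>)) powr \<beta>) \<le> ennreal (2 powr \<beta> * ((1/2) powr \<beta>) ^ j) * indicator (linf_ball c (2 ^ j * t)) y"
    using bnd jin by (simp add: linf_ball_def indicator_def)
  also have "\<dots> \<le> (\<Sum>j. ennreal (2 powr \<beta> * ((1/2) powr \<beta>) ^ j) * indicator (linf_ball c (2 ^ j * t)) y)"
    by (rule ennreal_term_le)
  finally show ?thesis .
qed

lemma tail_bound:
  assumes mu_borel: "sets mu = sets borel"
    and growth: "\<And>x \<rho>. \<rho> > 0 \<Longrightarrow> emeasure mu (linf_ball x \<rho>) \<le> ennreal (C * \<rho> powr m)"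
    and m: "m > 0" and \<beta>: "\<beta> > m" and t: "t > 0"
  shows "(\<integral>\<^sup>+ y. ennreal ((t / (t + linf_dist c y)) powr \<beta>) \<partial>mu) \<le> ennreal (tailK C m \<beta> * t powr m)"
proof -
  define q where "q = (1/2) powr \<beta> * 2 powr m"
  have q_eq: "q = 2 powr (m - \<beta>)" unfolding q_def by (simp add: powr_divide powr_diff)
  have "(2::real) powr (m - \<beta>) < 2 powr 0" using \<beta> by (intro powr_less_mono) auto
  then have q1: "q < 1" unfolding q_eq by simp
  have q0: "q \<ge> 0" unfolding q_def by simp
  have meas: "(\<lambda>y. ennreal (2 powr \<beta> * ((1/2) powr \<beta>) ^ j) * indicator (linf_ball c (2 ^ j * t)) y) \<in> borel_measurable mu" for j
    unfolding measurable_cong_sets[OF mu_borel refl] by measurable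
  have "(\<integral>\<^sup>+ y. ennreal ((t / (t + linf_dist c y)) powr \<beta>) \<partial>mu)
      \<le> (\<integral>\<^sup>+ y. (\<Sum>j. ennreal (2 powr \<beta> * ((1/2) powr \<beta>) ^ j) * indicator (linf_ball c (2 ^ j * t)) y) \<partial>mu)"
    by (rule nn_integral_mono) (rule tail_pointwise[OF t], use \<beta> m in simp)
  also have "\<dots> = (\<Sum>j. \<integral>\<^sup>+ y. ennreal (2 powr \<beta> * ((1/2) powr \<beta>) ^ j) * indicator (linf_ball c (2 ^ j * t)) y \<partial>mu)"
    by (rule nn_integral_suminf[OF meas])
  also have "\<dots> = (\<Sum>j. ennreal (2 powr \<beta> * ((1/2) powr \<beta>) ^ j) * emeasure mu (linf_ball c (2 ^ j * t)))"
  proof (rule suminf_cong)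
    fix j show "(\<integral>\<^sup>+ y. ennreal (2 powr \<beta> * ((1/2) powr \<beta>) ^ j) * indicator (linf_ball c (2 ^ j * t)) y \<partial>mu) = ennreal (2 powr \<beta> * ((1/2) powr \<beta>) ^ j) * emeasure mu (linf_ball c (2 ^ j * t))"
      by (rule nn_integral_cmult_indicator) (simp add: mu_borel)
  qed
  also have "\<dots> \<le> (\<Sum>j. ennreal (max C 0 * 2 powr \<beta> * t powr m * q ^ j))"
  proof (rule suminf_le)
    fix j
    have "emeasure mu (linf_ball c (2 ^ j * t)) \<le> ennreal (C * (2 ^ j * t) powr m)"
      using growth t by simp
    also have "\<dots> \<le> ennreal (max C 0 * (2 ^ j * t) powr m)"
      by (intro ennreal_leI mult_right_mono) auto
    finally have e: "emeasure mu (linf_ball c (2 ^ j * t)) \<le> ennreal (max C 0 * (2 ^ j * t) powr m)" .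
    have pw: "(2 ^ j * t) powr m = (2 powr m) ^ j * t powr m"
      using t by (simp add: powr_mult powr_realpow[symmetric] powr_powr powr_power mult.commute)
    have eqq: "2 powr \<beta> * ((1/2) powr \<beta>) ^ j * (max C 0 * (2 ^ j * t) powr m) = max C 0 * 2 powr \<beta> * t powr m * q ^ j"
      unfolding q_def pw by (simp add: power_mult_distrib algebra_simps)
    show "ennreal (2 powr \<beta> * ((1/2) powr \<beta>) ^ j) * emeasure mu (linf_ball c (2 ^ j * t)) \<le> ennreal (max C 0 * 2 powr \<beta> * t powr m * q ^ j)"
    proof -
      have "ennreal (2 powr \<beta> * ((1/2) powr \<beta>) ^ j) * emeasure mu (linf_ball c (2 ^ j * t))
          \<le> ennreal (2 powr \<beta> * ((1/2) powr \<beta>) ^ j) * ennreal (max C 0 * (2 ^ j * t) powr m)"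
        using e by (rule mult_left_mono) simp
      also have "\<dots> = ennreal (2 powr \<beta> * ((1/2) powr \<beta>) ^ j * (max C 0 * (2 ^ j * t) powr m))"
        by (rule ennreal_mult[symmetric]) auto
      finally show ?thesis using \<open>2 powr \<beta> * ((1/2) powr \<beta>) ^ j * (max C 0 * (2 ^ j * t) powr m) = max C 0 * 2 powr \<beta> * t powr m * q ^ j\<close> by simp
    qed
  qed auto
  also have "\<dots> = ennreal (\<Sum>j. max C 0 * 2 powr \<beta> * t powr m * q ^ j)"
  proof -
    have sg: "summable (\<lambda>j. max C 0 * 2 powr \<beta> * t powr m * q ^ j)"
      using q0 q1 by (intro summable_mult summable_geometric) simp
    show ?thesis by (rule suminf_ennreal2[OF _ sg]) (simp add: q0)
  qed
  also have "(\<Sum>j. max C 0 * 2 powr \<beta> * t powr m * q ^ j) = tailK C m \<beta> * t powr m"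
  proof -
    have "(\<Sum>j. max C 0 * 2 powr \<beta> * t powr m * q ^ j) = max C 0 * 2 powr \<beta> * t powr m * (\<Sum>j. q ^ j)"
      using q0 q1 by (intro suminf_mult summable_geometric) simp
    also have "(\<Sum>j. q ^ j) = 1 / (1 - q)" using q0 q1 by (intro suminf_geometric) simp
    finally show ?thesis unfolding tailK_def q_eq by simp
  qed
  finally show ?thesis .
qed



lemma powr_sq: "(x::real) \<ge> 0 \<Longrightarrow> (x powr a)^2 = x powr (2 * a)"
  by (simp add: power2_eq_square powr_add[symmetric])

lemma pw_split:
  fixes t d Cs \<rho> a S m \<alpha> ml :: real
  assumes t: "t > 0" and d: "d > 0" and Cs: "Cs \<ge> 0" and \<rho>: "\<rho> \<ge> 0" and a: "a \<ge> 0"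
    and tri: "d \<le> \<rho> + a" and ml: "ml \<ge> 0" and ma: "m + \<alpha> \<ge> 0"
    and S0: "S \<ge> 0" and Sb: "S \<le> (Cs * t powr \<alpha> / (t + a) powr (m + \<alpha>))^2"
  shows "S * ((t / (t + \<rho>)) powr ml / t powr m)
     \<le> (Cs^2 * t powr (2 * \<alpha>) * (d/2) powr (- (2 * (m + \<alpha>)))) * ((t / (t + \<rho>)) powr ml / t powr m)
       + (2 * t / d) powr ml * (S / t powr m)"
proof -
  let ?A = "Cs^2 * t powr (2 * \<alpha>) * (d/2) powr (- (2 * (m + \<alpha>)))"
  let ?W = "(t / (t + \<rho>)) powr ml / t powr m"
  let ?B = "(2 * t / d) powr ml"
  have W0: "?W \<ge> 0" by simp
  have B0: "?B \<ge> 0" by simp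
  show ?thesis
  proof (cases "a \<ge> d / 2")
    case True
    have "(d/2) powr (m + \<alpha>) \<le> (t + a) powr (m + \<alpha>)" using True t d ma by (intro powr_mono2) auto
    moreover have "(d/2) powr (m + \<alpha>) > 0" using d by simp
    ultimately have "Cs * t powr \<alpha> / (t + a) powr (m + \<alpha>) \<le> Cs * t powr \<alpha> / (d/2) powr (m + \<alpha>)"
    proof -
      have "(t + a) powr (m + \<alpha>) > 0" using t a by simp
      then show ?thesis using Cs \<open>(d/2) powr (m + \<alpha>) > 0\<close> \<open>(d/2) powr (m + \<alpha>) \<le> (t + a) powr (m + \<alpha>)\<close>
        by (intro divide_left_mono mult_nonneg_nonneg mult_pos_pos) auto
    qed
    then have "(Cs * t powr \<alpha> / (t + a) powr (m + \<alpha>))^2 \<le> (Cs * t powr \<alpha> / (d/2) powr (m + \<alpha>))^2"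
      using Cs t by (intro power_mono) auto
    also have "\<dots> = ?A"
    proof -
      have "(Cs * t powr \<alpha> / (d/2) powr (m + \<alpha>))^2 = Cs^2 * (t powr \<alpha>)^2 / ((d/2) powr (m + \<alpha>))^2"
        by (simp only: power_divide power_mult_distrib)
      also have "\<dots> = Cs^2 * t powr (2 * \<alpha>) / (d/2) powr (2 * (m + \<alpha>))"
        using t d by (simp only: powr_sq less_imp_le)
      also have "\<dots> = ?A" by (simp only: powr_minus divide_inverse)
      finally show ?thesis .
    qed
    finally have "S \<le> ?A" using Sb by simp
    then have "S * ?W \<le> ?A * ?W" using W0 by (rule mult_right_mono)
    moreover have "?B * (S / t powr m) \<ge> 0" using S0 B0 by simp
    ultimately show ?thesis by linarith
  next
    case False
    then have "\<rho> > d / 2" using tri by linarith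
    then have "t / (t + \<rho>) \<le> t / (d / 2)" using t d \<rho> by (intro divide_left_mono) auto
    then have "t / (t + \<rho>) \<le> 2 * t / d" by (simp add: mult.commute)
    then have "(t / (t + \<rho>)) powr ml \<le> ?B" using t \<rho> ml by (intro powr_mono2) auto
    then have "S * (t / (t + \<rho>)) powr ml \<le> S * ?B" using S0 by (rule mult_left_mono)
    then have "S * (t / (t + \<rho>)) powr ml / t powr m \<le> S * ?B / t powr m" by (rule divide_right_mono) simp
    then have "S * ?W \<le> ?B * (S / t powr m)" by (simp add: mult.commute)
    moreover have "?A * ?W \<ge> 0" using W0 by simp
    ultimately show ?thesis by linarith
  qed
qed

lemma powr_ident:
  fixes t a m \<alpha> :: real
  assumes "t > 0" "a \<ge> 0"
  shows "t powr \<alpha> / (t + a) powr (m + \<alpha>) = t powr (- m) * (t / (t + a)) powr (m + \<alpha>)"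
proof -
  have "t powr (- m) * t powr (m + \<alpha>) = t powr \<alpha>" by (simp add: powr_add[symmetric])
  then show ?thesis using assms by (simp add: powr_divide)
qed

lemma tailK_nonneg:
  assumes "\<beta> > m" shows "tailK C m \<beta> \<ge> 0"
proof -
  have "(2::real) powr (m - \<beta>) < 2 powr 0" using assms by (intro powr_less_mono) auto
  then show ?thesis unfolding tailK_def by simp
qed

lemma z_bound:
  fixes s :: "real ^ 'n \<Rightarrow> complex"
  assumes mu_borel: "sets mu = sets borel"
    and growth: "\<And>x \<rho>. \<rho> > 0 \<Longrightarrow> emeasure mu (linf_ball x \<rho>) \<le> ennreal (C\<mu> * \<rho> powr m)"
    and m: "m > 0" and lam: "lam > 2" and \<alpha>: "\<alpha> > 0"
    and smeas: "s \<in> borel_measurable borel"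
    and ssize: "\<And>y. norm (s y) \<le> Cs * t powr \<alpha> / (t + linf_dist y z) powr (m + \<alpha>)"
    and Cs: "Cs \<ge> 0" and t: "t > 0" and d: "d > 0" and dz: "d \<le> linf_dist x z"
  shows "(\<integral>\<^sup>+ y. ennreal ((cmod (s y))\<^sup>2 * ((t / (t + linf_dist x y)) powr (m * lam) / t powr m)) \<partial>mu)
     \<le> ennreal (Cs^2 * t powr (2 * \<alpha>) * (d/2) powr (- (2 * (m + \<alpha>))) * tailK C\<mu> m (m * lam)
              + (2 * t / d) powr (m * lam) * Cs^2 * t powr (- 2 * m) * tailK C\<mu> m (2 * m + 2 * \<alpha>))"
proof -
  define A where "A = Cs^2 * t powr (2 * \<alpha>) * (d/2) powr (- (2 * (m + \<alpha>)))"
  define B where "B = (2 * t / d) powr (m * lam)"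
  define Wt where "Wt = (\<lambda>y. (t / (t + linf_dist x y)) powr (m * lam))"
  define S where "S = (\<lambda>y. (cmod (s y))\<^sup>2)"
  define Kl where "Kl = tailK C\<mu> m (m * lam)"
  define K2 where "K2 = tailK C\<mu> m (2 * m + 2 * \<alpha>)"
  have A0: "A \<ge> 0" and B0: "B \<ge> 0" unfolding A_def B_def by simp_all
  have tm: "t powr m > 0" using t by simp
  have mc: "measurable mu N = measurable borel N" for N :: "'b measure" by (rule measurable_cong_sets[OF mu_borel refl])
  have Wt_meas: "Wt \<in> borel_measurable borel" unfolding Wt_def by measurable
  have S_meas: "S \<in> borel_measurable borel" unfolding S_def using smeas by measurable
  note [measurable] = Wt_meas S_meas
  have pw: "S y * (Wt y / t powr m) \<le> A * (Wt y / t powr m) + B * (S y / t powr m)" for y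
    unfolding A_def B_def Wt_def S_def
  proof (rule pw_split[OF t d Cs linf_nonneg linf_nonneg])
    show "d \<le> linf_dist x y + linf_dist y z" using dz linf_tri[of x z y] by simp
    show "0 \<le> m * lam" using m lam by simp
    show "0 \<le> m + \<alpha>" using m \<alpha> by simp
    show "0 \<le> (cmod (s y))\<^sup>2" by simp
    show "(cmod (s y))\<^sup>2 \<le> (Cs * t powr \<alpha> / (t + linf_dist y z) powr (m + \<alpha>))\<^sup>2"
      using ssize[of y] by (intro power_mono) auto
  qed
  have "(\<integral>\<^sup>+ y. ennreal ((cmod (s y))\<^sup>2 * ((t / (t + linf_dist x y)) powr (m * lam) / t powr m)) \<partial>mu)
      = (\<integral>\<^sup>+ y. ennreal (S y * (Wt y / t powr m)) \<partial>mu)" unfolding S_def Wt_def ..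
  also have "\<dots> \<le> (\<integral>\<^sup>+ y. ennreal (A * (Wt y / t powr m)) + ennreal (B * (S y / t powr m)) \<partial>mu)"
  proof (rule nn_integral_mono)
    fix y
    have "ennreal (S y * (Wt y / t powr m)) \<le> ennreal (A * (Wt y / t powr m) + B * (S y / t powr m))"
      using pw by (rule ennreal_leI)
    also have "\<dots> = ennreal (A * (Wt y / t powr m)) + ennreal (B * (S y / t powr m))"
      using A0 B0 tm by (intro ennreal_plus) (auto simp: Wt_def S_def)
    finally show "ennreal (S y * (Wt y / t powr m)) \<le> ennreal (A * (Wt y / t powr m)) + ennreal (B * (S y / t powr m))" .
  qed
  also have "\<dots> = (\<integral>\<^sup>+ y. ennreal (A * (Wt y / t powr m)) \<partial>mu) + (\<integral>\<^sup>+ y. ennreal (B * (S y / t powr m)) \<partial>mu)"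
    by (rule nn_integral_add) (unfold mc; measurable)+
  also have "(\<integral>\<^sup>+ y. ennreal (A * (Wt y / t powr m)) \<partial>mu) \<le> ennreal (A * Kl)"
  proof -
    have "(\<integral>\<^sup>+ y. ennreal (A * (Wt y / t powr m)) \<partial>mu) = (\<integral>\<^sup>+ y. ennreal (A / t powr m) * ennreal (Wt y) \<partial>mu)"
      using A0 tm by (intro nn_integral_cong) (simp add: Wt_def ennreal_mult[symmetric])
    also have "\<dots> = ennreal (A / t powr m) * (\<integral>\<^sup>+ y. ennreal (Wt y) \<partial>mu)"
      by (rule nn_integral_cmult) (simp add: mc Wt_meas)
    also have "\<dots> \<le> ennreal (A / t powr m) * ennreal (Kl * t powr m)"
      unfolding Wt_def Kl_def
      by (intro mult_left_mono tail_bound[OF mu_borel growth m]) (use m lam t in auto)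
    also have "\<dots> = ennreal (A * Kl)"
    proof -
      have Kl0: "Kl \<ge> 0" unfolding Kl_def using m lam by (intro tailK_nonneg) simp
      have "ennreal (A / t powr m) * ennreal (Kl * t powr m) = ennreal (A / t powr m * (Kl * t powr m))"
        using A0 tm Kl0 by (intro ennreal_mult[symmetric]) auto
      also have "A / t powr m * (Kl * t powr m) = A * Kl" using tm by simp
      finally show ?thesis .
    qed
    finally show ?thesis .
  qed
  also have "(\<integral>\<^sup>+ y. ennreal (B * (S y / t powr m)) \<partial>mu) \<le> ennreal (B * Cs^2 * t powr (- 2 * m) * K2)"
  proof -
    have sq: "S y \<le> Cs^2 * t powr (- 2 * m) * (t / (t + linf_dist z y)) powr (2 * m + 2 * \<alpha>)" for y
    proof -
      have "norm (s y) \<le> Cs * (t powr (- m) * (t / (t + linf_dist y z)) powr (m + \<alpha>))"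
      proof -
        have "Cs * t powr \<alpha> / (t + linf_dist y z) powr (m + \<alpha>) = Cs * (t powr \<alpha> / (t + linf_dist y z) powr (m + \<alpha>))"
          by simp
        also have "\<dots> = Cs * (t powr (- m) * (t / (t + linf_dist y z)) powr (m + \<alpha>))"
          by (simp only: powr_ident[OF t linf_nonneg, of \<alpha> y z m])
        finally show ?thesis using ssize[of y] by simp
      qed
      then have "S y \<le> (Cs * (t powr (- m) * (t / (t + linf_dist y z)) powr (m + \<alpha>)))^2"
        unfolding S_def by (intro power_mono) auto
      also have "\<dots> = Cs^2 * (t powr (- m))^2 * ((t / (t + linf_dist y z)) powr (m + \<alpha>))^2"
        by (simp add: power_mult_distrib)
      also have "\<dots> = Cs^2 * t powr (- 2 * m) * (t / (t + linf_dist z y)) powr (2 * m + 2 * \<alpha>)"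
        using t linf_nonneg[of y z] by (simp add: powr_sq linf_sym[of y z] algebra_simps)
      finally show ?thesis .
    qed
    define c where "c = B * Cs^2 * t powr (- 2 * m) / t powr m"
    have c0: "c \<ge> 0" unfolding c_def using B0 by simp
    have "(\<integral>\<^sup>+ y. ennreal (B * (S y / t powr m)) \<partial>mu)
        \<le> (\<integral>\<^sup>+ y. ennreal c * ennreal ((t / (t + linf_dist z y)) powr (2 * m + 2 * \<alpha>)) \<partial>mu)"
    proof (rule nn_integral_mono)
      fix y
      have "B * (S y / t powr m) \<le> B * (Cs^2 * t powr (- 2 * m) * (t / (t + linf_dist z y)) powr (2 * m + 2 * \<alpha>) / t powr m)"
        using sq[of y] B0 tm by (intro mult_left_mono divide_right_mono) auto
      also have "\<dots> = c * (t / (t + linf_dist z y)) powr (2 * m + 2 * \<alpha>)"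
        unfolding c_def by simp
      finally show "ennreal (B * (S y / t powr m)) \<le> ennreal c * ennreal ((t / (t + linf_dist z y)) powr (2 * m + 2 * \<alpha>))"
        using c0 by (simp add: ennreal_mult[symmetric] ennreal_leI)
    qed
    also have "\<dots> = ennreal c * (\<integral>\<^sup>+ y. ennreal ((t / (t + linf_dist z y)) powr (2 * m + 2 * \<alpha>)) \<partial>mu)"
      by (rule nn_integral_cmult) (simp add: mc)
    also have "\<dots> \<le> ennreal c * ennreal (K2 * t powr m)"
      unfolding K2_def
      by (intro mult_left_mono tail_bound[OF mu_borel growth m]) (use m \<alpha> t in auto)
    also have "\<dots> = ennreal (B * Cs^2 * t powr (- 2 * m) * K2)"
    proof -
      have K20: "K2 \<ge> 0" unfolding K2_def using m \<alpha> by (intro tailK_nonneg) simp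
      have "ennreal c * ennreal (K2 * t powr m) = ennreal (c * (K2 * t powr m))"
        using c0 tm K20 by (intro ennreal_mult[symmetric]) auto
      also have "c * (K2 * t powr m) = B * Cs^2 * t powr (- 2 * m) * K2" using tm unfolding c_def by simp
      finally show ?thesis .
    qed
    finally show ?thesis .
  qed
  finally have fin: "(\<integral>\<^sup>+ y. ennreal ((cmod (s y))\<^sup>2 * ((t / (t + linf_dist x y)) powr (m * lam) / t powr m)) \<partial>mu)
     \<le> ennreal (A * Kl) + ennreal (B * Cs^2 * t powr (- 2 * m) * K2)"
    by (auto intro: add_left_mono add_right_mono)
  have Kl0: "Kl \<ge> 0" unfolding Kl_def using m lam by (intro tailK_nonneg) simp
  have K20: "K2 \<ge> 0" unfolding K2_def using m \<alpha> by (intro tailK_nonneg) simp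
  have "ennreal (A * Kl) + ennreal (B * Cs^2 * t powr (- 2 * m) * K2) = ennreal (A * Kl + B * Cs^2 * t powr (- 2 * m) * K2)"
    using A0 B0 Kl0 K20 by (intro ennreal_plus[symmetric]) auto
  also have "A * Kl + B * Cs^2 * t powr (- 2 * m) * K2 = Cs^2 * t powr (2 * \<alpha>) * (d/2) powr (- (2 * (m + \<alpha>))) * tailK C\<mu> m (m * lam)
              + (2 * t / d) powr (m * lam) * Cs^2 * t powr (- 2 * m) * tailK C\<mu> m (2 * m + 2 * \<alpha>)"
    unfolding A_def B_def Kl_def K2_def by simp
  finally show ?thesis using fin by simp
qed



lemma exps:
  fixes k i m lam \<alpha> \<gamma> t Cs Kl K2 :: real
  assumes m: "m > 0" and lam: "lam > 2" and \<alpha>: "0 < \<alpha>" "\<alpha> \<le> m * (lam - 2) / 2"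
    and \<gamma>: "0 < \<gamma>" "\<gamma> < 1/2" "\<gamma> \<le> \<alpha> / (2 * (m + \<alpha>))"
    and i: "i \<ge> 1" and t1: "2 powr (k - 1) < t" and t2: "t \<le> 2 powr k"
    and Cs: "Cs \<ge> 0" and Kl: "Kl \<ge> 0" and K2: "K2 \<ge> 0"
  defines "d \<equiv> (2 powr k) powr \<gamma> * (2 powr (k + (i - 1))) powr (1 - \<gamma>)"
  shows "Cs^2 * t powr (2 * \<alpha>) * (d/2) powr (- (2 * (m + \<alpha>))) * Kl
          + (2 * t / d) powr (m * lam) * Cs^2 * t powr (- 2 * m) * K2
     \<le> (Cs^2 * 2 powr (4 * (m + \<alpha>)) * Kl + Cs^2 * 2 powr (2 * m * lam) * 2 powr (2 * m) * K2)
        * 2 powr (- \<alpha> * i) * 2 powr (- 2 * (k + i) * m)"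
proof -
  have t0: "t > 0" using t1 by (smt (verit) powr_gt_zero)
  have dP: "d = 2 powr (k + (i - 1) * (1 - \<gamma>))"
    unfolding d_def by (simp add: powr_powr powr_add[symmetric] algebra_simps)
  have d2: "d / 2 = 2 powr (k + (i - 1) * (1 - \<gamma>) - 1)"
    unfolding dP by (simp add: powr_diff)
  have g1: "2 * (m + \<alpha>) * (1 - \<gamma>) \<ge> 2 * m + \<alpha>"
  proof -
    have "2 * (m + \<alpha>) * \<gamma> \<le> \<alpha>" using \<gamma>(3) m \<alpha> by (simp add: field_simps)
    then show ?thesis by (simp add: algebra_simps)
  qed
  have g2: "m * lam * (1 - \<gamma>) \<ge> 2 * m + \<alpha>"
  proof -
    have "m * lam \<ge> 2 * m + 2 * \<alpha>" using \<alpha>(2) by (simp add: algebra_simps)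
    then have "m * lam * (1 - \<gamma>) \<ge> (2 * m + 2 * \<alpha>) * (1 - \<gamma>)" using \<gamma> by (intro mult_right_mono) auto
    then show ?thesis using g1 by (simp add: algebra_simps)
  qed
  have ta: "t powr (2 * \<alpha>) \<le> 2 powr (k * (2 * \<alpha>))"
  proof -
    have "t powr (2 * \<alpha>) \<le> (2 powr k) powr (2 * \<alpha>)" using t0 t2 \<alpha> by (intro powr_mono2) auto
    then show ?thesis by (simp add: powr_powr)
  qed
  have T1: "t powr (2 * \<alpha>) * (d/2) powr (- (2 * (m + \<alpha>))) \<le> 2 powr (4 * (m + \<alpha>)) * 2 powr (- \<alpha> * i) * 2 powr (- 2 * (k + i) * m)"
  proof -
    have "t powr (2 * \<alpha>) * (d/2) powr (- (2 * (m + \<alpha>))) \<le> 2 powr (k * (2 * \<alpha>)) * (d/2) powr (- (2 * (m + \<alpha>)))"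
      using ta by (intro mult_right_mono) auto
    also have "\<dots> = 2 powr (k * (2 * \<alpha>) - (k + (i - 1) * (1 - \<gamma>) - 1) * (2 * (m + \<alpha>)))"
      unfolding d2 by (simp add: powr_powr powr_add[symmetric]) (rule arg_cong[where f="(powr) 2"], simp add: algebra_simps)
    also have "\<dots> \<le> 2 powr (4 * (m + \<alpha>) - \<alpha> * i - 2 * (k + i) * m)"
    proof (rule powr_mono)
      have "(2 * (m + \<alpha>) * (1 - \<gamma>) - (2 * m + \<alpha>)) * (i - 1) \<ge> 0" using g1 i by simp
      moreover have "2 * (m + \<alpha>) * \<gamma> \<ge> 0" using m \<alpha> \<gamma> by simp
      ultimately show "k * (2 * \<alpha>) - (k + (i - 1) * (1 - \<gamma>) - 1) * (2 * (m + \<alpha>)) \<le> 4 * (m + \<alpha>) - \<alpha> * i - 2 * (k + i) * m"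
        using \<alpha> m by (simp add: algebra_simps)
    qed simp
    also have "\<dots> = 2 powr (4 * (m + \<alpha>)) * 2 powr (- \<alpha> * i) * 2 powr (- 2 * (k + i) * m)"
      by (simp add: powr_add[symmetric]) (rule arg_cong[where f="(powr) 2"], simp add: algebra_simps)
    finally show ?thesis .
  qed
  have T2: "(2 * t / d) powr (m * lam) * t powr (- 2 * m) \<le> 2 powr (2 * m * lam) * 2 powr (2 * m) * 2 powr (- \<alpha> * i) * 2 powr (- 2 * (k + i) * m)"
  proof -
    have "2 * t / d \<le> 2 * 2 powr k / d" using t2 by (intro divide_right_mono) (auto simp: dP)
    also have "\<dots> = 2 powr (1 - (i - 1) * (1 - \<gamma>))"
    proof -
      have "(2::real) powr (1 - (i - 1) * (1 - \<gamma>)) = 2 powr (1 + k - (k + (i - 1) * (1 - \<gamma>)))"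
        by (rule arg_cong[where f="(powr) 2"]) simp
      also have "\<dots> = 2 powr (1 + k) / 2 powr (k + (i - 1) * (1 - \<gamma>))" by (rule powr_diff)
      also have "\<dots> = 2 * 2 powr k / 2 powr (k + (i - 1) * (1 - \<gamma>))" by (simp add: powr_add)
      finally show ?thesis unfolding dP by simp
    qed
    finally have "(2 * t / d) powr (m * lam) \<le> (2 powr (1 - (i - 1) * (1 - \<gamma>))) powr (m * lam)"
      using t0 m lam by (intro powr_mono2) (auto simp: dP)
    then have a: "(2 * t / d) powr (m * lam) \<le> 2 powr ((1 - (i - 1) * (1 - \<gamma>)) * (m * lam))"
      by (simp add: powr_powr)
    have "t powr (- 2 * m) \<le> (2 powr (k - 1)) powr (- 2 * m)" using t0 t1 m by (intro powr_mono2') auto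
    then have b: "t powr (- 2 * m) \<le> 2 powr ((k - 1) * (- 2 * m))" by (simp add: powr_powr)
    have "(2 * t / d) powr (m * lam) * t powr (- 2 * m) \<le> 2 powr ((1 - (i - 1) * (1 - \<gamma>)) * (m * lam)) * 2 powr ((k - 1) * (- 2 * m))"
      using a b by (intro mult_mono) auto
    also have "\<dots> = 2 powr ((1 - (i - 1) * (1 - \<gamma>)) * (m * lam) + (k - 1) * (- 2 * m))" by (rule powr_add[symmetric])
    also have "\<dots> \<le> 2 powr (2 * m * lam + 2 * m - \<alpha> * i - 2 * (k + i) * m)"
    proof (rule powr_mono)
      have "(m * lam * (1 - \<gamma>) - (2 * m + \<alpha>)) * (i - 1) \<ge> 0" using g2 i by simp
      moreover have "m * lam * \<gamma> \<ge> 0" using m lam \<gamma> by simp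
      ultimately show "(1 - (i - 1) * (1 - \<gamma>)) * (m * lam) + (k - 1) * (- 2 * m) \<le> 2 * m * lam + 2 * m - \<alpha> * i - 2 * (k + i) * m"
        using \<alpha> m by (simp add: algebra_simps)
    qed simp
    also have "\<dots> = 2 powr (2 * m * lam) * 2 powr (2 * m) * 2 powr (- \<alpha> * i) * 2 powr (- 2 * (k + i) * m)"
      by (simp add: powr_add[symmetric]) (rule arg_cong[where f="(powr) 2"], simp add: algebra_simps)
    finally show ?thesis .
  qed
  have "Cs^2 * t powr (2 * \<alpha>) * (d/2) powr (- (2 * (m + \<alpha>))) * Kl = (Cs^2 * Kl) * (t powr (2 * \<alpha>) * (d/2) powr (- (2 * (m + \<alpha>))))"
    by (simp add: algebra_simps)
  also have "\<dots> \<le> (Cs^2 * Kl) * (2 powr (4 * (m + \<alpha>)) * 2 powr (- \<alpha> * i) * 2 powr (- 2 * (k + i) * m))"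
    using T1 Cs Kl by (intro mult_left_mono) auto
  finally have A: "Cs^2 * t powr (2 * \<alpha>) * (d/2) powr (- (2 * (m + \<alpha>))) * Kl \<le> (Cs^2 * Kl) * (2 powr (4 * (m + \<alpha>)) * 2 powr (- \<alpha> * i) * 2 powr (- 2 * (k + i) * m))" .
  have "(2 * t / d) powr (m * lam) * Cs^2 * t powr (- 2 * m) * K2 = (Cs^2 * K2) * ((2 * t / d) powr (m * lam) * t powr (- 2 * m))"
    by (simp add: algebra_simps)
  also have "\<dots> \<le> (Cs^2 * K2) * (2 powr (2 * m * lam) * 2 powr (2 * m) * 2 powr (- \<alpha> * i) * 2 powr (- 2 * (k + i) * m))"
    using T2 Cs K2 by (intro mult_left_mono) auto
  finally have B: "(2 * t / d) powr (m * lam) * Cs^2 * t powr (- 2 * m) * K2 \<le> (Cs^2 * K2) * (2 powr (2 * m * lam) * 2 powr (2 * m) * 2 powr (- \<alpha> * i) * 2 powr (- 2 * (k + i) * m))" .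
  show ?thesis using add_mono[OF A B] by (simp add: algebra_simps)
qed



lemma chain:
  fixes mu :: "'a::{second_countable_topology, topological_space} measure"
    and s :: "'a \<Rightarrow> 'a \<Rightarrow> complex" and g :: "'a \<Rightarrow> complex" and W :: "'a \<Rightarrow> real"
  assumes sf: "sigma_finite_measure mu" and mu_borel: "sets mu = sets borel"
    and smeas: "(\<lambda>w. s (fst w) (snd w)) \<in> borel_measurable (borel \<Otimes>\<^sub>M borel)"
    and gmeas: "g \<in> borel_measurable borel"
    and Wmeas: "W \<in> borel_measurable borel" and W0: "\<And>y. W y \<ge> 0"
    and zb: "\<And>z. g z \<noteq> 0 \<Longrightarrow> (\<integral>\<^sup>+ y. ennreal ((cmod (s y z))\<^sup>2 * W y) \<partial>mu) \<le> ennreal K"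
  shows "(\<integral>\<^sup>+ y. ennreal ((cmod (LINT z|mu. s y z * g z))\<^sup>2 * W y) \<partial>mu)
           \<le> (\<integral>\<^sup>+ z. ennreal (cmod (g z)) \<partial>mu)^2 * ennreal K"
proof -
  interpret pair_sigma_finite mu mu using sf by (simp add: pair_sigma_finite_def)
  have mc: "measurable mu N = measurable borel N" for N :: "'b measure"
    by (rule measurable_cong_sets[OF mu_borel refl])
  have mc2: "measurable (mu \<Otimes>\<^sub>M mu) N = measurable (borel \<Otimes>\<^sub>M borel) N" for N :: "'b measure"
    by (rule measurable_cong_sets[OF sets_pair_measure_cong[OF mu_borel mu_borel] refl])
  have s2: "(\<lambda>z. s y z) \<in> borel_measurable borel" for y
    using measurable_Pair2[OF smeas, of y] by simp
  have s1: "(\<lambda>y. s y z) \<in> borel_measurable borel" for z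
    using measurable_comp[OF measurable_Pair2'[of z borel borel] smeas] by (simp add: o_def)
  note [measurable] = s1 s2 gmeas Wmeas smeas
  define G where "G = (\<integral>\<^sup>+ z. ennreal (cmod (g z)) \<partial>mu)"
  define F where "F = (\<lambda>y z. ennreal ((cmod (s y z))\<^sup>2 * cmod (g z) * W y))"
  have Fmeas: "(\<lambda>w. F (snd w) (fst w)) \<in> borel_measurable (mu \<Otimes>\<^sub>M mu)"
  proof -
    have sw: "(\<lambda>w. s (snd w) (fst w)) \<in> borel_measurable (borel \<Otimes>\<^sub>M borel)"
      using measurable_comp[OF measurable_pair_swap'[of borel borel] smeas] by (simp add: o_def case_prod_beta)
    note [measurable] = sw
    show ?thesis unfolding F_def mc2 by measurable
  qed
  have step1: "ennreal (cmod (LINT z|mu. s y z * g z)) \<le> (\<integral>\<^sup>+ z. ennreal (cmod (s y z) * cmod (g z)) \<partial>mu)" for y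
  proof (cases "integrable mu (\<lambda>z. s y z * g z)")
    case True
    then have "ennreal (cmod (LINT z|mu. s y z * g z)) \<le> (\<integral>\<^sup>+ z. ennreal (norm (s y z * g z)) \<partial>mu)"
      by (intro integral_norm_bound_ennreal)
    then show ?thesis by (simp add: norm_mult)
  next
    case False
    then show ?thesis by (simp add: not_integrable_integral_eq)
  qed
  have step2: "(\<integral>\<^sup>+ z. ennreal (cmod (s y z) * cmod (g z)) \<partial>mu)^2 \<le> (\<integral>\<^sup>+ z. ennreal ((cmod (s y z))\<^sup>2 * cmod (g z)) \<partial>mu) * G" for y
  proof -
    have cs: "(\<integral>\<^sup>+ z. ennreal (cmod (s y z) * sqrt (cmod (g z))) * ennreal (sqrt (cmod (g z))) \<partial>mu)\<^sup>2
       \<le> (\<integral>\<^sup>+ z. (ennreal (cmod (s y z) * sqrt (cmod (g z))))^2 \<partial>mu) * (\<integral>\<^sup>+ z. (ennreal (sqrt (cmod (g z))))^2 \<partial>mu)"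
      by (rule Cauchy_Schwarz_nn_integral) (simp_all add: mc)
    have e1: "ennreal (cmod (s y z) * sqrt (cmod (g z))) * ennreal (sqrt (cmod (g z))) = ennreal (cmod (s y z) * cmod (g z))" for z
      by (simp add: ennreal_mult[symmetric] mult.assoc)
    have e2: "(ennreal (cmod (s y z) * sqrt (cmod (g z))))^2 = ennreal ((cmod (s y z))\<^sup>2 * cmod (g z))" for z
      by (subst ennreal_power) (auto simp: power_mult_distrib)
    have e3: "(ennreal (sqrt (cmod (g z))))^2 = ennreal (cmod (g z))" for z
      by (subst ennreal_power) auto
    show ?thesis using cs unfolding e1 e2 e3 G_def .
  qed
  have "(\<integral>\<^sup>+ y. ennreal ((cmod (LINT z|mu. s y z * g z))\<^sup>2 * W y) \<partial>mu)
      \<le> (\<integral>\<^sup>+ y. G * ((\<integral>\<^sup>+ z. ennreal ((cmod (s y z))\<^sup>2 * cmod (g z)) \<partial>mu) * ennreal (W y)) \<partial>mu)"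
  proof (rule nn_integral_mono)
    fix y
    have "ennreal ((cmod (LINT z|mu. s y z * g z))\<^sup>2 * W y) = (ennreal (cmod (LINT z|mu. s y z * g z)))^2 * ennreal (W y)"
      using W0 by (simp add: ennreal_mult ennreal_power[symmetric])
    also have "\<dots> \<le> (\<integral>\<^sup>+ z. ennreal (cmod (s y z) * cmod (g z)) \<partial>mu)^2 * ennreal (W y)"
      by (intro mult_right_mono power_mono step1) auto
    also have "\<dots> \<le> ((\<integral>\<^sup>+ z. ennreal ((cmod (s y z))\<^sup>2 * cmod (g z)) \<partial>mu) * G) * ennreal (W y)"
      by (intro mult_right_mono step2) auto
    finally show "ennreal ((cmod (LINT z|mu. s y z * g z))\<^sup>2 * W y) \<le> G * ((\<integral>\<^sup>+ z. ennreal ((cmod (s y z))\<^sup>2 * cmod (g z)) \<partial>mu) * ennreal (W y))"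
      by (simp add: mult_ac)
  qed
  also have "\<dots> = (\<integral>\<^sup>+ y. G * (\<integral>\<^sup>+ z. F y z \<partial>mu) \<partial>mu)"
  proof (rule nn_integral_cong)
    fix y
    have "(\<integral>\<^sup>+ z. ennreal ((cmod (s y z))\<^sup>2 * cmod (g z)) \<partial>mu) * ennreal (W y) = (\<integral>\<^sup>+ z. ennreal ((cmod (s y z))\<^sup>2 * cmod (g z)) * ennreal (W y) \<partial>mu)"
      by (rule nn_integral_multc[symmetric]) (simp add: mc)
    also have "\<dots> = (\<integral>\<^sup>+ z. F y z \<partial>mu)"
      unfolding F_def using W0 by (intro nn_integral_cong) (simp add: ennreal_mult)
    finally show "G * ((\<integral>\<^sup>+ z. ennreal ((cmod (s y z))\<^sup>2 * cmod (g z)) \<partial>mu) * ennreal (W y)) = G * (\<integral>\<^sup>+ z. F y z \<partial>mu)" by simp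
  qed
  also have "\<dots> = G * (\<integral>\<^sup>+ y. (\<integral>\<^sup>+ z. F y z \<partial>mu) \<partial>mu)"
  proof (rule nn_integral_cmult)
    have "(\<lambda>w. F (fst w) (snd w)) \<in> borel_measurable (mu \<Otimes>\<^sub>M mu)"
      unfolding F_def mc2 by measurable
    then show "(\<lambda>y. \<integral>\<^sup>+ z. F y z \<partial>mu) \<in> borel_measurable mu"
      using sigma_finite_measure.borel_measurable_nn_integral_fst[OF sf, where f="\<lambda>w. F (fst w) (snd w)" ] by simp
  qed
  also have "G * (\<integral>\<^sup>+ y. (\<integral>\<^sup>+ z. F y z \<partial>mu) \<partial>mu) = G * (\<integral>\<^sup>+ z. (\<integral>\<^sup>+ y. F y z \<partial>mu) \<partial>mu)"
    using Fubini'[of "\<lambda>z y. F y z"] Fmeas by simp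
  also have "\<dots> \<le> G * (\<integral>\<^sup>+ z. ennreal (cmod (g z)) * ennreal K \<partial>mu)"
  proof (intro mult_left_mono nn_integral_mono)
    fix z
    have "(\<integral>\<^sup>+ y. F y z \<partial>mu) = (\<integral>\<^sup>+ y. ennreal (cmod (g z)) * ennreal ((cmod (s y z))\<^sup>2 * W y) \<partial>mu)"
      unfolding F_def using W0 by (intro nn_integral_cong) (simp add: ennreal_mult[symmetric] mult_ac)
    also have "\<dots> = ennreal (cmod (g z)) * (\<integral>\<^sup>+ y. ennreal ((cmod (s y z))\<^sup>2 * W y) \<partial>mu)"
      by (rule nn_integral_cmult) (simp add: mc)
    also have "\<dots> \<le> ennreal (cmod (g z)) * ennreal K"
    proof (cases "g z = 0")
      case True then show ?thesis by simp
    next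
      case False then show ?thesis by (intro mult_left_mono zb) auto
    qed
    finally show "(\<integral>\<^sup>+ y. F y z \<partial>mu) \<le> ennreal (cmod (g z)) * ennreal K" .
  qed simp
  also have "\<dots> = G * (G * ennreal K)"
    unfolding G_def by (subst nn_integral_multc) (simp_all add: mc)
  finally show ?thesis unfolding G_def by (simp add: power2_eq_square mult_ac)
qed



lemma dcube_borel: "dcube beta k v \<in> sets borel"
  unfolding dcube_def by measurable

lemma Dk_borel: "Q \<in> Dk beta k \<Longrightarrow> Q \<in> sets borel"
  using dcube_borel by (auto simp: Dk_def)

lemma mu_sigma_finite:
  fixes mu :: "(real ^ 'n) measure"
  assumes mu_borel: "sets mu = sets borel"
    and growth: "\<And>x \<rho>. \<rho> > 0 \<Longrightarrow> emeasure mu (linf_ball x \<rho>) \<le> ennreal (C * \<rho> powr m)"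
  shows "sigma_finite_measure mu"
proof
  have sp: "space mu = UNIV" using sets_eq_imp_space_eq[OF mu_borel] by simp
  let ?A = "range (\<lambda>n::nat. linf_ball (0::real^'n) (real n + 1))"
  show "\<exists>A. countable A \<and> A \<subseteq> sets mu \<and> \<Union> A = space mu \<and> (\<forall>a\<in>A. emeasure mu a \<noteq> \<infinity>)"
  proof (intro exI[of _ ?A] conjI)
    show "countable ?A" by simp
    show "?A \<subseteq> sets mu" using mu_borel linf_ball_borel by blast
    show "\<Union> ?A = space mu"
    proof -
      have "y \<in> \<Union> ?A" for y
      proof -
        obtain n :: nat where "linf_dist 0 y < real n" using reals_Archimedean2 by blast
        then have "y \<in> linf_ball 0 (real n + 1)" by (simp add: linf_ball_def)
        then show ?thesis by blast
      qed
      then show ?thesis using sp by auto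
    qed
    show "\<forall>a\<in>?A. emeasure mu a \<noteq> \<infinity>"
    proof
      fix a assume "a \<in> ?A"
      then obtain n :: nat where a: "a = linf_ball 0 (real n + 1)" by blast
      have "emeasure mu a \<le> ennreal (C * (real n + 1) powr m)" unfolding a by (rule growth) simp
      then show "emeasure mu a \<noteq> \<infinity>" by (auto simp: top_unique)
    qed
  qed
qed

lemma tDelta_meas:
  assumes b01: "\<And>j i. beta j $ i \<in> {0, 1}"
    and mu_borel: "sets mu = sets borel"
    and Qs: "Qs \<in> dyadic beta" and Q: "Q \<in> dyadic beta" and QQs: "Q \<subseteq> Qs"
    and b_meas: "\<And>Q. Q \<in> dyadic beta \<Longrightarrow> b Q \<in> borel_measurable mu"
  shows "tDelta beta mu b A p Qs Q f \<in> borel_measurable borel"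
proof -
  have mc: "measurable mu N = measurable borel N" for N :: "'b measure"
    by (rule measurable_cong_sets[OF mu_borel refl])
  have bm: "Q' \<in> dyadic beta \<Longrightarrow> b Q' \<in> borel_measurable borel" for Q' using b_meas mc by blast
  have spQ: "b (stop_parent beta mu b A p Qs Q) \<in> borel_measurable borel"
    by (rule bm[OF stop_parent_dyadic[where beta=beta, OF b01 Qs Q QQs]])
  have ch: "Q' \<in> Dk beta (dlevel beta Q - 1) \<and> Q' \<subseteq> Q" if "Q' \<in> children beta Q" for Q'
    using that unfolding children_def by blast
  have trm: "(\<lambda>x. indicator Q' x *
          (avg mu Q' f / avg mu Q' (b (stop_parent beta mu b A p Qs Q')) * b (stop_parent beta mu b A p Qs Q') x
           - avg mu Q f / avg mu Q (b (stop_parent beta mu b A p Qs Q)) * b (stop_parent beta mu b A p Qs Q) x))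
        \<in> borel_measurable borel" if "Q' \<in> children beta Q" for Q'
  proof -
    have Q'D: "Q' \<in> dyadic beta" using ch[OF that] Dk_dyadic by blast
    have "b (stop_parent beta mu b A p Qs Q') \<in> borel_measurable borel"
      using ch[OF that] QQs by (intro bm stop_parent_dyadic[where beta=beta, OF b01 Qs Q'D]) auto
    moreover have "Q' \<in> sets borel" using ch[OF that] Dk_borel by blast
    ultimately show ?thesis using spQ
      by (intro borel_measurable_times borel_measurable_indicator' borel_measurable_diff borel_measurable_const) auto
  qed
  have "(\<lambda>x. if Q = Qs then avg mu Qs f * b Qs x else 0) \<in> borel_measurable borel"
    using bm[OF Qs] by (intro measurable_If borel_measurable_times borel_measurable_const) auto
  then show ?thesis unfolding tDelta_def
    by (intro borel_measurable_add borel_measurable_sum trm) auto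
qed



theorem lemma4p3:
  fixes mu :: "(real ^ 'n) measure"
    and m lam \<alpha> C\<^sub>\<mu> C\<^sub>s :: real
    and s :: "real \<Rightarrow> real ^ 'n \<Rightarrow> real ^ 'n \<Rightarrow> complex"
    and beta :: "int \<Rightarrow> real ^ 'n"
    and r :: nat and \<gamma> :: real
    and p A :: real
    and b :: "(real ^ 'n) set \<Rightarrow> real ^ 'n \<Rightarrow> complex"
    and sQ :: int and Qs :: "(real ^ 'n) set"
  assumes m_pos: "m > 0"
    and mu_borel: "sets mu = sets borel"
    and mu_growth: "\<And>x \<rho>. \<rho> > 0 \<Longrightarrow> emeasure mu (linf_ball x \<rho>) \<le> ennreal (C\<^sub>\<mu> * \<rho> powr m)"
    and lam: "lam > 2"
    and alpha: "0 < \<alpha>" "\<alpha> \<le> m * (lam - 2) / 2"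
    and s_meas: "\<And>t. t > 0 \<Longrightarrow> (\<lambda>w. s t (fst w) (snd w)) \<in> borel_measurable (borel \<Otimes>\<^sub>M borel)"
    and s_size: "\<And>t x y. t > 0 \<Longrightarrow>
        norm (s t x y) \<le> C\<^sub>s * t powr \<alpha> / (t + linf_dist x y) powr (m + \<alpha>)"
    and s_hoelder: "\<And>t x y y'. t > 0 \<Longrightarrow> linf_dist y y' < t / 2 \<Longrightarrow>
        norm (s t x y - s t x y') \<le> C\<^sub>s * linf_dist y y' powr \<alpha> / (t + linf_dist x y) powr (m + \<alpha>)"
    and beta01: "\<And>j i. beta j $ i \<in> {0, 1}"
    and r_ge: "r \<ge> 1"
    and gamma: "0 < \<gamma>" "\<gamma> < 1/2" "\<gamma> \<le> \<alpha> / (2 * (m + \<alpha>))"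
               "m * \<gamma> / (1 - \<gamma>) \<le> \<alpha> / 4"
    and p: "1 < p" "p \<le> 2"
    and b_meas: "\<And>Q. Q \<in> dyadic beta \<Longrightarrow> b Q \<in> borel_measurable mu"
    and b_supp: "\<And>Q x. Q \<in> dyadic beta \<Longrightarrow> x \<notin> Q \<Longrightarrow> b Q x = 0"
    and b_avg: "\<And>Q. Q \<in> dyadic beta \<Longrightarrow> measure mu Q > 0 \<Longrightarrow> avg mu Q (b Q) = 1"
    and b_Lp: "\<And>Q. Q \<in> dyadic beta \<Longrightarrow>
        (\<integral>\<^sup>+ x. ennreal (norm (b Q x) powr p) \<partial>mu) \<le> ennreal (A * measure mu Q)"
    and Qs: "Qs \<in> Dk beta sQ"
  shows "\<exists>C. \<forall>k R i x t f.
      R \<in> Dk beta k \<and> good beta r \<gamma> R \<and> i \<ge> r + 1 \<and> anc beta i R \<subseteq> Qs \<and>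
      x \<in> R \<and> side beta R / 2 < t \<and> t \<le> side beta R \<and> loc_integrable mu f \<longrightarrow>
      (\<integral>\<^sup>+ y. ennreal ((cmod (theta mu s t
             (\<lambda>z. indicator (anc beta i R - anc beta (i - 1) R) z * tDelta beta mu b A p Qs (anc beta i R) f z) y))\<^sup>2
           * (t / (t + linf_dist x y)) powr (m * lam) / t powr m) \<partial>mu)
      \<le> (ennreal (C * 2 powr (- (\<alpha> / 2) * real i) * 2 powr (- real_of_int (k + int i) * m))
          * (\<integral>\<^sup>+ y. ennreal (cmod (tDelta beta mu b A p Qs (anc beta i R) f y)) \<partial>mu))\<^sup>2"
proof -
  note b01 = beta01
  have mc: "measurable mu N = measurable borel N" for N :: "'b measure"
    by (rule measurable_cong_sets[OF mu_borel refl])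
  have Cs0: "C\<^sub>s \<ge> 0"
  proof -
    fix x0 :: "real ^ 'n"
    have "norm (s 1 x0 x0) \<le> C\<^sub>s * 1 powr \<alpha> / (1 + linf_dist x0 x0) powr (m + \<alpha>)" by (rule s_size) simp
    then have "0 \<le> C\<^sub>s * 1 powr \<alpha> / (1 + linf_dist x0 x0) powr (m + \<alpha>)" by (rule order_trans[OF norm_ge_zero])
    then have "0 \<le> C\<^sub>s / (1 + linf_dist x0 x0) powr (m + \<alpha>)" by simp
    moreover have "(1 + linf_dist x0 x0) powr (m + \<alpha>) > 0" using linf_nonneg[of x0 x0] by simp
    ultimately show ?thesis by (simp add: zero_le_divide_iff)
  qed
  have sf: "sigma_finite_measure mu" by (rule mu_sigma_finite[OF mu_borel mu_growth])
  have QsD: "Qs \<in> dyadic beta" using Qs by (rule Dk_dyadic)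
  define Kl where "Kl = tailK C\<^sub>\<mu> m (m * lam)"
  define K2 where "K2 = tailK C\<^sub>\<mu> m (2 * m + 2 * \<alpha>)"
  define K1 where "K1 = C\<^sub>s^2 * 2 powr (4 * (m + \<alpha>)) * Kl + C\<^sub>s^2 * 2 powr (2 * m * lam) * 2 powr (2 * m) * K2"
  have Kl0: "Kl \<ge> 0" unfolding Kl_def using m_pos lam by (intro tailK_nonneg) simp
  have K20: "K2 \<ge> 0" unfolding K2_def using m_pos alpha by (intro tailK_nonneg) simp
  have K10: "K1 \<ge> 0" unfolding K1_def using Kl0 K20 by simp
  show ?thesis
  proof (intro exI[of _ "sqrt K1"] allI impI)
    fix k R i x t f
    assume H: "R \<in> Dk beta k \<and> good beta r \<gamma> R \<and> i \<ge> r + 1 \<and> anc beta i R \<subseteq> Qs \<and>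
      x \<in> R \<and> side beta R / 2 < t \<and> t \<le> side beta R \<and> loc_integrable mu f"
    then have R: "R \<in> Dk beta k" and good: "good beta r \<gamma> R" and iR: "i \<ge> r + 1"
      and PQs: "anc beta i R \<subseteq> Qs" and x: "x \<in> R" and tlo: "side beta R / 2 < t" and thi: "t \<le> side beta R"
      by auto
    have sR: "side beta R = 2 powr k" by (rule side_Dk[where beta=beta, OF b01 R])
    have t1: "2 powr (real_of_int k - 1) < t" using tlo sR by (simp add: powr_diff)
    have t2: "t \<le> 2 powr (real_of_int k)" using thi sR by simp
    have "0 < (2::real) powr (real_of_int k - 1)" by simp
    then have t0: "t > 0" using t1 by linarith
    have i1: "i \<ge> 1" using iR r_ge by simp
    define P where "P = anc beta i R"
    define J where "J = anc beta (i - 1) R"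
    define D where "D = tDelta beta mu b A p Qs P f"
    define g where "g = (\<lambda>z. indicator (P - J) z * D z)"
    have PD: "P \<in> Dk beta (k + int i)" unfolding P_def by (rule anc_props(1)[where beta=beta, OF b01 R])
    have JD: "J \<in> Dk beta (k + int (i - 1))" unfolding J_def by (rule anc_props(1)[where beta=beta, OF b01 R])
    have RJ: "R \<subseteq> J" unfolding J_def by (rule anc_props(2)[where beta=beta, OF b01 R])
    define d where "d = (2 powr real_of_int k) powr \<gamma> * (2 powr (real_of_int k + (real i - 1))) powr (1 - \<gamma>)"
    have d0: "d > 0" unfolding d_def by simp
    have dist: "d \<le> linf_dist x z" if "g z \<noteq> 0" for z
    proof -
      have "z \<notin> J" using that unfolding g_def by (auto simp: indicator_def)
      then have "linf_dist x z > (2 powr k) powr \<gamma> * (2 powr (k + int (i - 1))) powr (1 - \<gamma>)"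
        using good_dist[where beta=beta, OF b01 good R JD _ RJ x] iR by simp
      moreover have "real_of_int (k + int (i - 1)) = real_of_int k + (real i - 1)" using i1 by (simp add: of_nat_diff)
      ultimately show ?thesis unfolding d_def by simp
    qed
    have PDy: "P \<in> dyadic beta" using PD by (rule Dk_dyadic)
    have PsQ: "P \<subseteq> Qs" using PQs by (simp add: P_def)
    have Dmeas: "D \<in> borel_measurable borel" unfolding D_def
      by (rule tDelta_meas[where beta=beta, OF b01 mu_borel QsD PDy PsQ b_meas])
    have gmeas: "g \<in> borel_measurable borel" unfolding g_def
      using Dmeas Dk_borel[OF PD] Dk_borel[OF JD] by measurable
    define W where "W = (\<lambda>y. (t / (t + linf_dist x y)) powr (m * lam) / t powr m)"
    have Wmeas: "W \<in> borel_measurable borel" unfolding W_def by measurable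
    have W0: "W y \<ge> 0" for y unfolding W_def by simp
    define K where "K = C\<^sub>s^2 * t powr (2 * \<alpha>) * (d/2) powr (- (2 * (m + \<alpha>))) * tailK C\<^sub>\<mu> m (m * lam)
              + (2 * t / d) powr (m * lam) * C\<^sub>s^2 * t powr (- 2 * m) * tailK C\<^sub>\<mu> m (2 * m + 2 * \<alpha>)"
    have smt: "(\<lambda>w. s t (fst w) (snd w)) \<in> borel_measurable (borel \<Otimes>\<^sub>M borel)" using s_meas t0 by blast
    have zb: "(\<integral>\<^sup>+ y. ennreal ((cmod (s t y z))\<^sup>2 * W y) \<partial>mu) \<le> ennreal K" if "g z \<noteq> 0" for z
    proof -
      have s1: "(\<lambda>y. s t y z) \<in> borel_measurable borel"
        using measurable_comp[OF measurable_Pair2'[of z borel borel] smt] by (simp add: o_def)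
      show ?thesis unfolding W_def K_def
        by (rule z_bound[OF mu_borel mu_growth m_pos lam alpha(1) s1 s_size[OF t0] Cs0 t0 d0 dist[OF that]])
    qed
    have ch: "(\<integral>\<^sup>+ y. ennreal ((cmod (LINT z|mu. s t y z * g z))\<^sup>2 * W y) \<partial>mu)
           \<le> (\<integral>\<^sup>+ z. ennreal (cmod (g z)) \<partial>mu)^2 * ennreal K"
      by (rule chain[OF sf mu_borel smt gmeas Wmeas W0 zb])
    have Kb: "K \<le> K1 * 2 powr (- \<alpha> * real i) * 2 powr (- 2 * (real_of_int k + real i) * m)"
      unfolding K_def K1_def d_def Kl_def[symmetric] K2_def[symmetric]
      by (rule exps[OF m_pos lam alpha gamma(1,2,3) _ t1 t2 Cs0 Kl0 K20]) (use i1 in simp)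
    define c where "c = sqrt K1 * 2 powr (- (\<alpha> / 2) * real i) * 2 powr (- real_of_int (k + int i) * m)"
    have c0: "c \<ge> 0" unfolding c_def using K10 by simp
    have csq: "c^2 = K1 * 2 powr (- \<alpha> * real i) * 2 powr (- 2 * (real_of_int k + real i) * m)"
    proof -
      have "c^2 = (sqrt K1)^2 * (2 powr (- (\<alpha> / 2) * real i))^2 * (2 powr (- real_of_int (k + int i) * m))^2"
        unfolding c_def by (simp add: power_mult_distrib)
      also have "\<dots> = K1 * 2 powr (2 * (- (\<alpha> / 2) * real i)) * 2 powr (2 * (- real_of_int (k + int i) * m))"
        using K10 by (simp add: powr_sq)
      also have "\<dots> = K1 * 2 powr (- \<alpha> * real i) * 2 powr (- 2 * (real_of_int k + real i) * m)"
        by (simp add: algebra_simps)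
      finally show ?thesis .
    qed
    have Gle: "(\<integral>\<^sup>+ z. ennreal (cmod (g z)) \<partial>mu) \<le> (\<integral>\<^sup>+ z. ennreal (cmod (D z)) \<partial>mu)"
    proof (rule nn_integral_mono)
      fix z show "ennreal (cmod (g z)) \<le> ennreal (cmod (D z))"
        unfolding g_def by (intro ennreal_leI) (auto simp: indicator_def norm_mult)
    qed
    have "(\<integral>\<^sup>+ y. ennreal ((cmod (theta mu s t g y))\<^sup>2 * (t / (t + linf_dist x y)) powr (m * lam) / t powr m) \<partial>mu)
        = (\<integral>\<^sup>+ y. ennreal ((cmod (LINT z|mu. s t y z * g z))\<^sup>2 * W y) \<partial>mu)"
      unfolding theta_def W_def by (simp add: times_divide_eq_right)
    also have "\<dots> \<le> (\<integral>\<^sup>+ z. ennreal (cmod (g z)) \<partial>mu)^2 * ennreal K" by (rule ch)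
    also have "\<dots> \<le> (\<integral>\<^sup>+ z. ennreal (cmod (D z)) \<partial>mu)^2 * ennreal (c^2)"
      using Gle Kb csq by (intro mult_mono power_mono ennreal_leI) auto
    also have "\<dots> = (ennreal c * (\<integral>\<^sup>+ z. ennreal (cmod (D z)) \<partial>mu))^2"
      using c0 by (simp add: power_mult_distrib ennreal_power mult.commute)
    finally show "(\<integral>\<^sup>+ y. ennreal ((cmod (theta mu s t
             (\<lambda>z. indicator (anc beta i R - anc beta (i - 1) R) z * tDelta beta mu b A p Qs (anc beta i R) f z) y))\<^sup>2
           * (t / (t + linf_dist x y)) powr (m * lam) / t powr m) \<partial>mu)
      \<le> (ennreal (sqrt K1 * 2 powr (- (\<alpha> / 2) * real i) * 2 powr (- real_of_int (k + int i) * m))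
          * (\<integral>\<^sup>+ y. ennreal (cmod (tDelta beta mu b A p Qs (anc beta i R) f y)) \<partial>mu))\<^sup>2"
      unfolding c_def g_def D_def P_def J_def .
  qed
qed


end
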